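(* For all half-integers $a',b',c',d',p',q'\in\tfrac12\mathbb{Z}$, $$\sum_{X'\in\frac12\mathbb{Z}}(2X'+1)\begin{Bmatrix}a'&b'&X'\\c'&d'&p'\end{Bmatrix}_{ext}\begin{Bmatrix}a'&b'&X'\\c'&d'&q'\end{Bmatrix}_{ext}=\delta_{p'q'}\,\frac{\{a'p'd'\}_{SU(1,1)}\,\{b'c'p'\}_{SU(1,1)}}{2p'+1},$$ where only finitely many terms of the sum are nonzero.
   Context: A triple of reals $(x,y,z)$ (order matters) is SU(2)-admissible if $x+y-z\ge0$, $x-y+z\ge0$, $-x+y+z\ge0$, $x+y+z\ge-1$; it is SU(1,1)-admissible if $z\ge x+y+1$, $x\le y+z$, $y\le x+z$, $x+y+z\ge-1$. For half-integers, $\{xyz\}_{SU(1,1)}$ equals $1$ if $(x,y,z)$ is SU(1,1)-admissible and $x+y+z\in\mathbb{Z}$, and $0$ otherwise. The SU(2) 6j symbol of a 6-tuple of reals is $$\begin{Bmatrix}a&b&c\\d&e&f\end{Bmatrix}_{SU(2)}=\Delta(abc)\Delta(cde)\Delta(bdf)\Delta(aef)\sum_n\frac{(-1)^n(n+1)!}{(n-a-b-c)!(n-c-d-e)!(n-b-d-f)!(n-a-e-f)!(a+b+d+e-n)!(a+c+d+f-n)!(b+c+e+f-n)!},$$ with $\Delta(xyz)=\sqrt{\frac{(x+y-z)!(x-y+z)!(-x+y+z)!}{(x+y+z+1)!}}$. The sum is over integers $n$ for which all factorial arguments are nonnegative integers, and the symbol is defined to be $0$ whenever any factorial appearing in the $\Delta$'s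 has an argument that is not a nonnegative integer. Let $S:(a',b',c',d',e',f')\mapsto(a,b,c,d,e,f)$ with $a=\tfrac12(a'+b'-d'+e')$, $b=\tfrac12(-a'-b'-d'+e')-1$, $c=c'$, $d=\tfrac12(-a'+b'+d'+e')$, $e=\tfrac12(a'-b'+d'+e')$, $f=f'$. The extension is defined by $\begin{Bmatrix}a'&b'&c'\\d'&e'&f'\end{Bmatrix}_{ext}:=\begin{Bmatrix}a&b&c\\d&e&f\end{Bmatrix}_{SU(2)}$, where $(a,\dots,f)=S(a',\dots,f')$. *)

theory Defs
  imports Complex_Main
begin

text \<open>Factorial of a real argument; only used when the argument is a nonnegative integer.\<close>
definition rfact :: "real \<Rightarrow> real" where
  "rfact r = fact (nat \<lfloor>r\<rfloor>)"

definition delta_ok :: "real \<Rightarrow> real \<Rightarrow> real \<Rightarrow> bool" where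
  "delta_ok x y z \<longleftrightarrow> x + y - z \<in> \<nat> \<and> x - y + z \<in> \<nat> \<and> - x + y + z \<in> \<nat> \<and> x + y + z + 1 \<in> \<nat>"

definition Delta :: "real \<Rightarrow> real \<Rightarrow> real \<Rightarrow> real" where
  "Delta x y z = sqrt (rfact (x + y - z) * rfact (x - y + z) * rfact (- x + y + z) / rfact (x + y + z + 1))"

definition racah_ok :: "real \<Rightarrow> real \<Rightarrow> real \<Rightarrow> real \<Rightarrow> real \<Rightarrow> real \<Rightarrow> int \<Rightarrow> bool" where
  "racah_ok a b c d e f n \<longleftrightarrow>
     real_of_int n + 1 \<in> \<nat> \<and>
     real_of_int n - a - b - c \<in> \<nat> \<and> real_of_int n - c - d - e \<in> \<nat> \<and>
     real_of_int n - b - d - f \<in> \<nat> \<and> real_of_int n - a - e - f \<in> \<nat> \<and>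
     a + b + d + e - real_of_int n \<in> \<nat> \<and> a + c + d + f - real_of_int n \<in> \<nat> \<and>
     b + c + e + f - real_of_int n \<in> \<nat>"

definition sixj_SU2 :: "real \<Rightarrow> real \<Rightarrow> real \<Rightarrow> real \<Rightarrow> real \<Rightarrow> real \<Rightarrow> real" where
  "sixj_SU2 a b c d e f =
    (if delta_ok a b c \<and> delta_ok c d e \<and> delta_ok b d f \<and> delta_ok a e f then
       Delta a b c * Delta c d e * Delta b d f * Delta a e f *
       (\<Sum>n\<in>{n. racah_ok a b c d e f n}.
          (-1) ^ nat \<bar>n\<bar> * rfact (real_of_int n + 1) /
          (rfact (real_of_int n - a - b - c) * rfact (real_of_int n - c - d - e) *
           rfact (real_of_int n - b - d - f) * rfact (real_of_int n - a - e - f) *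
           rfact (a + b + d + e - real_of_int n) * rfact (a + c + d + f - real_of_int n) *
           rfact (b + c + e + f - real_of_int n)))
     else 0)"

text \<open>The extended 6j symbol: SU(2) 6j symbol composed with the map S.\<close>
definition sixj_ext :: "real \<Rightarrow> real \<Rightarrow> real \<Rightarrow> real \<Rightarrow> real \<Rightarrow> real \<Rightarrow> real" where
  "sixj_ext a' b' c' d' e' f' =
     sixj_SU2 ((a' + b' - d' + e') / 2) ((- a' - b' - d' + e') / 2 - 1) c'
              ((- a' + b' + d' + e') / 2) ((a' - b' + d' + e') / 2) f'"

definition su11_adm :: "real \<Rightarrow> real \<Rightarrow> real \<Rightarrow> bool" where
  "su11_adm x y z \<longleftrightarrow> z \<ge> x + y + 1 \<and> x \<le> y + z \<and> y \<le> x + z \<and> x + y + z \<ge> -1"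

definition su11_sym :: "real \<Rightarrow> real \<Rightarrow> real \<Rightarrow> real" where
  "su11_sym x y z = (if su11_adm x y z \<and> x + y + z \<in> \<int> then 1 else 0)"

end

theory Submission
  imports Defs
begin

definition rf :: "real \<Rightarrow> real" where
  "rf x = (if x \<in> \<nat> then 1 / fact (nat \<lfloor>x\<rfloor>) else 0)"

definition fr :: "real \<Rightarrow> real" where
  "fr x = (if x \<in> \<nat> then fact (nat \<lfloor>x\<rfloor>) else 0)"

lemma rf_of_nat [simp]: "rf (real n) = 1 / fact n"
  by (simp add: rf_def)

lemma fr_of_nat [simp]: "fr (real n) = fact n"
  by (simp add: fr_def)

lemma Nats_real_iff: "(x::real) \<in> \<nat> \<longleftrightarrow> (\<exists>n. x = real n)"
  by (auto simp: Nats_def)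

lemma rf_notNat [simp]: "x \<notin> \<nat> \<Longrightarrow> rf x = 0"
  by (simp add: rf_def)

lemma fr_notNat [simp]: "x \<notin> \<nat> \<Longrightarrow> fr x = 0"
  by (simp add: fr_def)

lemma Nats_plus1_iff: "(x::real) + 1 \<in> \<nat> \<longleftrightarrow> x \<in> \<nat> \<or> x = -1"
proof
  assume "x + 1 \<in> \<nat>"
  then obtain m where m: "x + 1 = real m" by (auto simp: Nats_real_iff)
  show "x \<in> \<nat> \<or> x = -1"
  proof (cases m)
    case 0 then show ?thesis using m by simp
  next
    case (Suc k) then have "x = real k" using m by simp
    then show ?thesis by simp
  qed
next
  assume "x \<in> \<nat> \<or> x = -1" then show "x + 1 \<in> \<nat>"
    by (auto simp: Nats_real_iff) (metis of_nat_Suc add.commute)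
qed

lemma rf_shift: "rf x = (x + 1) * rf (x + 1)"
proof (cases "x \<in> \<nat>")
  case True
  then obtain n where n: "x = real n" by (auto simp: Nats_real_iff)
  have "x + 1 = real (Suc n)" using n by simp
  then have "rf (x + 1) = 1 / fact (Suc n)" by (metis rf_of_nat)
  moreover have "(fact (Suc n) :: real) = (real n + 1) * fact n" by simp
  moreover have "(fact n :: real) + fact n * real n > 0"
    by (simp add: add_pos_nonneg)
  ultimately show ?thesis using n by (simp add: field_simps)
next
  case False
  show ?thesis
  proof (cases "x = -1")
    case True then show ?thesis using False by simp
  next
    case F2: False
    then have "x + 1 \<notin> \<nat>" using False Nats_plus1_iff by blast
    then show ?thesis using False by simp
  qed
qed

lemma fr_shift: "x \<noteq> -1 \<Longrightarrow> fr (x + 1) = (x + 1) * fr x"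
proof (cases "x \<in> \<nat>")
  case True
  then obtain n where n: "x = real n" by (auto simp: Nats_real_iff)
  have "x + 1 = real (Suc n)" using n by simp
  then have "fr (x + 1) = fact (Suc n)" by (metis fr_of_nat)
  then show ?thesis using n by (simp add: field_simps)
next
  case False
  assume "x \<noteq> -1"
  then have "x + 1 \<notin> \<nat>" using False Nats_plus1_iff by blast
  then show ?thesis using False by simp
qed

lemma rf_nonneg: "rf x \<ge> 0" by (simp add: rf_def)
lemma fr_nonneg: "fr x \<ge> 0" by (simp add: fr_def)

lemma rf_nz_iff: "rf x \<noteq> 0 \<longleftrightarrow> x \<in> \<nat>"
  by (simp add: rf_def)
lemma fr_nz_iff: "fr x \<noteq> 0 \<longleftrightarrow> x \<in> \<nat>"
  by (simp add: fr_def)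

lemma fr_rf: "x \<in> \<nat> \<Longrightarrow> fr x * rf x = 1"
  by (simp add: fr_def rf_def)

lemma fr_rf_rf: "fr x * rf x * rf x = rf x"
  by (cases "x \<in> \<nat>") (simp_all add: fr_rf)

lemma rf_neg: "x < 0 \<Longrightarrow> rf x = 0"
  by (auto simp: rf_def Nats_real_iff)

lemma fr_neg: "x < 0 \<Longrightarrow> fr x = 0"
  by (auto simp: fr_def Nats_real_iff)

definition sg :: "int \<Rightarrow> real" where "sg n = (-1) ^ nat \<bar>n\<bar>"

lemma sg_succ: "sg (n + 1) = - sg n"
proof (cases "n \<ge> 0")
  case True
  then have "nat \<bar>n + 1\<bar> = Suc (nat \<bar>n\<bar>)" by simp
  then show ?thesis unfolding sg_def by (metis power_Suc mult_minus1)
next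
  case False
  then have "nat \<bar>n\<bar> = Suc (nat \<bar>n + 1\<bar>)" by simp
  then show ?thesis unfolding sg_def by (metis power_Suc mult_minus1 minus_minus)
qed


definition recP :: "real \<Rightarrow> real \<Rightarrow> real \<Rightarrow> real \<Rightarrow> real \<Rightarrow> real" where
  "recP a b X d e = (X+1+a-b)*(X+1-a+b)*(X+1+d-e)*(X+1-d+e)"
definition recQ :: "real \<Rightarrow> real \<Rightarrow> real \<Rightarrow> real \<Rightarrow> real \<Rightarrow> real" where
  "recQ a b X d e = (a+b+1-X)*(a+b+1+X)*(d+e+1-X)*(d+e+1+X)"
definition recF :: "real \<Rightarrow> real \<Rightarrow> real \<Rightarrow> real \<Rightarrow> real \<Rightarrow> real \<Rightarrow> real" where
  "recF a b X d e p = (2*X+1)*((X*(X+1))*(-(X*(X+1))+a*(a+1)+b*(b+1)-2*(p*(p+1)))+d*(d+1)*(X*(X+1)+a*(a+1)-b*(b+1))+e*(e+1)*(X*(X+1)-a*(a+1)+b*(b+1)))"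
definition recq :: "real \<Rightarrow> real \<Rightarrow> real \<Rightarrow> real \<Rightarrow> real \<Rightarrow> real \<Rightarrow> real \<Rightarrow> real" where
  "recq a b X d e p m = ((1)*a^2*b*X^2 + (-1)*a^2*b*X*d + (-1)*a^2*b*X*e + (-1)*a^2*b*d + (-1)*a^2*b*e + (-1)*a^2*b + (-3)*a^2*X^2*d + (1)*a^2*X^2*p + (-1)*a^2*X*d^2 + (-1)*a^2*X*d*e + (-1)*a^2*X*d*p + (-3)*a^2*X*d + (-1)*a^2*X*e*p + (-3)*a^2*X*e + (-1)*a^2*X + (-1)*a^2*d*e + (-1)*a^2*d*p + (-1)*a^2*d + (-1)*a^2*e^2 + (-1)*a^2*e*p + (-2)*a^2*e + (-1)*a^2*p + (-1)*a^2 + (1)*a*b^2*X^2 + (-1)*a*b^2*X*d + (-1)*a*b^2*X*e + (-1)*a*b^2*d + (-1)*a*b^2*e + (-1)*a*b^2 + (3)*a*b*X^3 + (-2)*a*b*X^2*d + (-2)*a*b*X^2*e + (2)*a*b*X^2*p + (3)*a*b*X^2 + (-1)*a*b*X*d^2 + (-2)*a*b*X*d*e + (-2)*a*b*X*d*p + (-6)*a*b*X*d + (-1)*a*b*X*e^2 + (-2)*a*b*X*e*p + (-6)*a*b*X*e + (-3)*a*b*X + (-1)*a*b*d^2 + (-2)*a*b*d*e + (-2)*a*b*d*p + (-4)*a*b*d + (-1)*a*b*e^2 + (-2)*a*b*e*p + (-4)*a*b*e + (-2)*a*b*p + (-3)*a*b + (-5)*a*X^3*d + (3)*a*X^3*p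 + (1)*a*X^3 + (-3)*a*X^2*d^2 + (-2)*a*X^2*d*e + (-2)*a*X^2*d*p + (-9)*a*X^2*d + (-2)*a*X^2*e*p + (-6)*a*X^2*e + (1)*a*X^2*p^2 + (3)*a*X^2*p + (-1)*a*X^2 + (-1)*a*X*d^2*e + (-1)*a*X*d^2*p + (-3)*a*X*d^2 + (-1)*a*X*d*e^2 + (-2)*a*X*d*e*p + (-6)*a*X*d*e + (-1)*a*X*d*p^2 + (-6)*a*X*d*p + (-8)*a*X*d + (-1)*a*X*e^2*p + (-3)*a*X*e^2 + (-1)*a*X*e*p^2 + (-6)*a*X*e*p + (-9)*a*X*e + (-3)*a*X*p + (-4)*a*X + (-1)*a*d^2*e + (-1)*a*d^2*p + (-1)*a*d^2 + (-1)*a*d*e^2 + (-2)*a*d*e*p + (-4)*a*d*e + (-1)*a*d*p^2 + (-4)*a*d*p + (-3)*a*d + (-1)*a*e^2*p + (-2)*a*e^2 + (-1)*a*e*p^2 + (-4)*a*e*p + (-4)*a*e + (-1)*a*p^2 + (-3)*a*p + (-2)*a + (-3)*b^2*X^2*e + (1)*b^2*X^2*p + (-1)*b^2*X*d*e + (-1)*b^2*X*d*p + (-3)*b^2*X*d + (-1)*b^2*X*e^2 + (-1)*b^2*X*e*p + (-3)*b^2*X*e + (-1)*b^2*X + (-1)*b^2*d^2 + (-1)*b^2*d*e + (-1)*b^2*d*p + (-2)*b^2*d + (-1)*b^2*e*p + (-1)*b^2*e + (-1)*b^2*p + (-1)*b^2 + (-5)*b*X^3*e + (3)*b*X^3*p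 + (1)*b*X^3 + (-2)*b*X^2*d*e + (-2)*b*X^2*d*p + (-6)*b*X^2*d + (-3)*b*X^2*e^2 + (-2)*b*X^2*e*p + (-9)*b*X^2*e + (1)*b*X^2*p^2 + (3)*b*X^2*p + (-1)*b*X^2 + (-1)*b*X*d^2*e + (-1)*b*X*d^2*p + (-3)*b*X*d^2 + (-1)*b*X*d*e^2 + (-2)*b*X*d*e*p + (-6)*b*X*d*e + (-1)*b*X*d*p^2 + (-6)*b*X*d*p + (-9)*b*X*d + (-1)*b*X*e^2*p + (-3)*b*X*e^2 + (-1)*b*X*e*p^2 + (-6)*b*X*e*p + (-8)*b*X*e + (-3)*b*X*p + (-4)*b*X + (-1)*b*d^2*e + (-1)*b*d^2*p + (-2)*b*d^2 + (-1)*b*d*e^2 + (-2)*b*d*e*p + (-4)*b*d*e + (-1)*b*d*p^2 + (-4)*b*d*p + (-4)*b*d + (-1)*b*e^2*p + (-1)*b*e^2 + (-1)*b*e*p^2 + (-4)*b*e*p + (-3)*b*e + (-1)*b*p^2 + (-3)*b*p + (-2)*b + (4)*X^4*p + (3)*X^4 + (3)*X^3*d*e + (3)*X^3*d*p + (1)*X^3*d + (3)*X^3*e*p + (1)*X^3*e + (3)*X^3*p^2 + (10)*X^3*p + (5)*X^3 + (1)*X^2*d^2*e + (1)*X^2*d^2*p + (1)*X^2*d*e^2 + (2)*X^2*d*e*p + (3)*X^2*d*e + (1)*X^2*d*p^2 + (3)*X^2*d*p + (-1)*X^2*d + (1)*X^2*e^2*p + (1)*X^2*e*p^2 + (3)*X^2*e*p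 + (-1)*X^2*e + (3)*X^2*p^2 + (4)*X^2*p + (-1)*X*d^2 + (-3)*X*d*e + (-3)*X*d*p + (-4)*X*d + (-1)*X*e^2 + (-3)*X*e*p + (-4)*X*e + (-1)*X*p^2 + (-4)*X*p + (-3)*X + (-1)*d^2*e + (-1)*d^2*p + (-1)*d^2 + (-1)*d*e^2 + (-2)*d*e*p + (-3)*d*e + (-1)*d*p^2 + (-3)*d*p + (-2)*d + (-1)*e^2*p + (-1)*e^2 + (-1)*e*p^2 + (-3)*e*p + (-2)*e + (-1)*p^2 + (-2)*p + (-1)) + ((2)*a^2*X*d + (1)*a^2*X + (1)*a^2*d + (1)*a^2*e + (1)*a^2 + (-2)*a*b*X^2 + (2)*a*b*X*d + (2)*a*b*X*e + (2)*a*b*d + (2)*a*b*e + (2)*a*b + (6)*a*X^2*d + (-2)*a*X^2*p + (1)*a*X^2 + (2)*a*X*d^2 + (2)*a*X*d*e + (2)*a*X*d*p + (8)*a*X*d + (2)*a*X*e*p + (6)*a*X*e + (4)*a*X + (1)*a*d^2 + (2)*a*d*e + (2)*a*d*p + (4)*a*d + (1)*a*e^2 + (2)*a*e*p + (4)*a*e + (2)*a*p + (3)*a + (2)*b^2*X*e + (1)*b^2*X + (1)*b^2*d + (1)*b^2*e + (1)*b^2 + (6)*b*X^2*e + (-2)*b*X^2*p + (1)*b*X^2 + (2)*b*X*d*e + (2)*b*X*d*p + (6)*b*X*d + (2)*b*X*e^2 + (2)*b*X*e*p + (8)*b*X*e + (4)*b*X + (1)*b*d^2 + (2)*b*d*e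 + (2)*b*d*p + (4)*b*d + (1)*b*e^2 + (2)*b*e*p + (4)*b*e + (2)*b*p + (3)*b + (-6)*X^3*p + (-4)*X^3 + (-2)*X^2*d*e + (-2)*X^2*d*p + (1)*X^2*d + (-2)*X^2*e*p + (1)*X^2*e + (-2)*X^2*p^2 + (-10)*X^2*p + (-4)*X^2 + (1)*X*d^2 + (4)*X*d + (1)*X*e^2 + (4)*X*e + (-2)*X*p^2 + (-2)*X*p + (2)*X + (1)*d^2 + (2)*d*e + (2)*d*p + (3)*d + (1)*e^2 + (2)*e*p + (3)*e + (2)*p + (2))*m + ((-2)*a*X*d + (-1)*a*X + (-1)*a*d + (-1)*a*e + (-1)*a + (-2)*b*X*e + (-1)*b*X + (-1)*b*d + (-1)*b*e + (-1)*b + (2)*X^2*p + (1)*X^2 + (-1)*X*d + (-1)*X*e + (2)*X*p + (-1)*d + (-1)*e + (-1))*m^2"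

lemma rec_poly:
  fixes a b X d e p n :: real
  shows "- (n+2)*(a+b+d+e-n)*(a+X+d+p-n+1)*(b+X+e+p-n+1)*recq a b X d e p (n+1) - (n-a-b-X+1)*(n-X-d-e+1)*(n-b-d-p)*(n-a-e-p)*recq a b X d e p n
   = X*recP a b X d e*((n-a-b-X)*(n-a-b-X+1)*(n-X-d-e)*(n-X-d-e+1)) + recF a b X d e p*((n-a-b-X+1)*(n-X-d-e+1)*(a+X+d+p-n+1)*(b+X+e+p-n+1)) + (X+1)*recQ a b X d e*((a+X+d+p-n)*(a+X+d+p-n+1)*(b+X+e+p-n)*(b+X+e+p-n+1))"
  unfolding recP_def recQ_def recF_def recq_def
  by algebra


definition rt :: "real \<Rightarrow> real \<Rightarrow> real \<Rightarrow> real \<Rightarrow> real \<Rightarrow> real \<Rightarrow> int \<Rightarrow> real" where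
  "rt a b c d e f n = sg n * fr (real_of_int n + 1) *
     rf (real_of_int n - a - b - c) * rf (real_of_int n - c - d - e) *
     rf (real_of_int n - b - d - f) * rf (real_of_int n - a - e - f) *
     rf (a + b + d + e - real_of_int n) * rf (a + c + d + f - real_of_int n) *
     rf (b + c + e + f - real_of_int n)"

definition racah :: "real \<Rightarrow> real \<Rightarrow> real \<Rightarrow> real \<Rightarrow> real \<Rightarrow> real \<Rightarrow> real" where
  "racah a b c d e f = (\<Sum>n\<in>{-1..\<lceil>a+b+d+e\<rceil>}. rt a b c d e f n)"

lemma rf_m1: "rf (x - 1) = x * rf x"
  using rf_shift[of "x - 1"] by simp

lemma lin3_helper: "True" by simp

lemma rf_cong: "x = y \<Longrightarrow> rf x = rf y" by simp

lemma telescope_int: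
  fixes f :: "int \<Rightarrow> real"
  shows "(\<Sum>n\<in>{m..m + int k - 1}. (f (n+1) - f n)) = f (m + int k) - f m"
proof (induction k)
  case 0 then show ?case by simp
next
  case (Suc k)
  have "{m..m + int (Suc k) - 1} = insert (m + int k) {m..m + int k - 1}" by auto
  then show ?case using Suc by (simp add: algebra_simps)
qed

lemma telescope_int2:
  fixes f :: "int \<Rightarrow> real"
  assumes "m \<le> N + 1"
  shows "(\<Sum>n\<in>{m..N}. (f (n+1) - f n)) = f (N + 1) - f m"
proof -
  obtain k where k: "N + 1 = m + int k"
    by (rule that[of "nat (N + 1 - m)"]) (use assms in simp)
  then have "N = m + int k - 1" by simp
  then have eq: "{m..N} = {m..m + int k - 1}" by simp
  show ?thesis unfolding eq k using telescope_int[of f m k] by simp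
qed

definition recG :: "real \<Rightarrow> real \<Rightarrow> real \<Rightarrow> real \<Rightarrow> real \<Rightarrow> real \<Rightarrow> int \<Rightarrow> real" where
  "recG a b X d e p n = sg n * fr (real_of_int n + 1) * rf (real_of_int n - a - b - X) *
      rf (real_of_int n - X - d - e) * rf (real_of_int n - b - d - p - 1) * rf (real_of_int n - a - e - p - 1) *
      rf (a + b + d + e - real_of_int n) * rf (a + X + d + p - real_of_int n + 1) *
      rf (b + X + e + p - real_of_int n + 1) * recq a b X d e p (real_of_int n)"

lemma rec_pointwise:
  fixes a b X d e p :: real and n :: int
  assumes n: "n \<ge> -1"
  shows "X * recP a b X d e * rt a b (X+1) d e p n + recF a b X d e p * rt a b X d e p n
     + (X+1) * recQ a b X d e * rt a b (X-1) d e p n = recG a b X d e p (n+1) - recG a b X d e p n"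
proof -
  define m where "m = real_of_int n"
  have m1: "m \<ge> -1" using n by (simp add: m_def)
  define K where "K = sg n * fr (m + 1) * rf (m - a - b - X + 1) * rf (m - X - d - e + 1) *
     rf (m - b - d - p) * rf (m - a - e - p) * rf (a + b + d + e - m) * rf (a + X + d + p - m + 1) *
     rf (b + X + e + p - m + 1)"
  have s1: "rf (m - a - b - X) = (m - a - b - X + 1) * rf (m - a - b - X + 1)" by (rule rf_shift)
  have s2: "rf (m - X - d - e) = (m - X - d - e + 1) * rf (m - X - d - e + 1)" by (rule rf_shift)
  have s3: "rf (a + X + d + p - m) = (a + X + d + p - m + 1) * rf (a + X + d + p - m + 1)" by (rule rf_shift)
  have s4: "rf (b + X + e + p - m) = (b + X + e + p - m + 1) * rf (b + X + e + p - m + 1)" by (rule rf_shift)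
  have t0: "rt a b X d e p n = K * ((m-a-b-X+1)*(m-X-d-e+1)*(a+X+d+p-m+1)*(b+X+e+p-m+1))"
    unfolding rt_def K_def m_def[symmetric] s1 s2 s3 s4 by (simp only: mult_ac)
  have u1: "rf (m - a - b - (X+1)) = (m - a - b - X) * ((m - a - b - X + 1) * rf (m - a - b - X + 1))"
  proof -
    have "rf (m - a - b - (X+1)) = rf ((m - a - b - X) - 1)" by (rule rf_cong) simp
    also have "\<dots> = (m - a - b - X) * rf (m - a - b - X)" by (rule rf_m1)
    also have "\<dots> = (m - a - b - X) * ((m - a - b - X + 1) * rf (m - a - b - X + 1))" by (simp only: s1)
    finally show ?thesis .
  qed
  have u2: "rf (m - (X+1) - d - e) = (m - X - d - e) * ((m - X - d - e + 1) * rf (m - X - d - e + 1))"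
  proof -
    have "rf (m - (X+1) - d - e) = rf ((m - X - d - e) - 1)" by (rule rf_cong) simp
    also have "\<dots> = (m - X - d - e) * rf (m - X - d - e)" by (rule rf_m1)
    also have "\<dots> = (m - X - d - e) * ((m - X - d - e + 1) * rf (m - X - d - e + 1))" by (simp only: s2)
    finally show ?thesis .
  qed
  have u3: "rf (a + (X+1) + d + p - m) = rf (a + X + d + p - m + 1)" by (rule rf_cong) simp
  have u4: "rf (b + (X+1) + e + p - m) = rf (b + X + e + p - m + 1)" by (rule rf_cong) simp
  have t1: "rt a b (X+1) d e p n = K * ((m-a-b-X)*(m-a-b-X+1)*(m-X-d-e)*(m-X-d-e+1))"
    unfolding rt_def K_def m_def[symmetric] u1 u2 u3 u4 by (simp only: mult_ac)
  have v1: "rf (m - a - b - (X-1)) = rf (m - a - b - X + 1)" by (rule rf_cong) simp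
  have v2: "rf (m - (X-1) - d - e) = rf (m - X - d - e + 1)" by (rule rf_cong) simp
  have v3: "rf (a + (X-1) + d + p - m) = (a + X + d + p - m) * ((a + X + d + p - m + 1) * rf (a + X + d + p - m + 1))"
  proof -
    have "rf (a + (X-1) + d + p - m) = rf ((a + X + d + p - m) - 1)" by (rule rf_cong) simp
    also have "\<dots> = (a + X + d + p - m) * rf (a + X + d + p - m)" by (rule rf_m1)
    also have "\<dots> = (a + X + d + p - m) * ((a + X + d + p - m + 1) * rf (a + X + d + p - m + 1))" by (simp only: s3)
    finally show ?thesis .
  qed
  have v4: "rf (b + (X-1) + e + p - m) = (b + X + e + p - m) * ((b + X + e + p - m + 1) * rf (b + X + e + p - m + 1))"
  proof -
    have "rf (b + (X-1) + e + p - m) = rf ((b + X + e + p - m) - 1)" by (rule rf_cong) simp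
    also have "\<dots> = (b + X + e + p - m) * rf (b + X + e + p - m)" by (rule rf_m1)
    also have "\<dots> = (b + X + e + p - m) * ((b + X + e + p - m + 1) * rf (b + X + e + p - m + 1))" by (simp only: s4)
    finally show ?thesis .
  qed
  have t2: "rt a b (X-1) d e p n = K * ((a+X+d+p-m)*(a+X+d+p-m+1)*(b+X+e+p-m)*(b+X+e+p-m+1))"
    unfolding rt_def K_def m_def[symmetric] v1 v2 v3 v4 by (simp only: mult_ac)
  have w3: "rf (m - b - d - p - 1) = (m - b - d - p) * rf (m - b - d - p)" by (rule rf_m1)
  have w4: "rf (m - a - e - p - 1) = (m - a - e - p) * rf (m - a - e - p)" by (rule rf_m1)
  have g0: "recG a b X d e p n = K * ((m-a-b-X+1)*(m-X-d-e+1)*(m-b-d-p)*(m-a-e-p) * recq a b X d e p m)"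
    unfolding recG_def K_def m_def[symmetric] s1 s2 w3 w4 by (simp only: mult_ac)
  have x0: "sg (n+1) = - sg n" by (rule sg_succ)
  have x1: "fr (real_of_int (n+1) + 1) = (m + 2) * fr (m + 1)"
    using fr_shift[of "m+1"] m1 by (simp add: m_def algebra_simps)
  have x2: "rf (real_of_int (n+1) - a - b - X) = rf (m - a - b - X + 1)" by (rule rf_cong) (simp add: m_def)
  have x3: "rf (real_of_int (n+1) - X - d - e) = rf (m - X - d - e + 1)" by (rule rf_cong) (simp add: m_def)
  have x4: "rf (real_of_int (n+1) - b - d - p - 1) = rf (m - b - d - p)" by (rule rf_cong) (simp add: m_def)
  have x5: "rf (real_of_int (n+1) - a - e - p - 1) = rf (m - a - e - p)" by (rule rf_cong) (simp add: m_def)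
  have x6: "rf (a + b + d + e - real_of_int (n+1)) = (a + b + d + e - m) * rf (a + b + d + e - m)"
  proof -
    have "rf (a + b + d + e - real_of_int (n+1)) = rf ((a + b + d + e - m) - 1)" by (rule rf_cong) (simp add: m_def)
    also have "\<dots> = (a + b + d + e - m) * rf (a + b + d + e - m)" by (rule rf_m1)
    finally show ?thesis .
  qed
  have x7: "rf (a + X + d + p - real_of_int (n+1) + 1) = (a + X + d + p - m + 1) * rf (a + X + d + p - m + 1)"
  proof -
    have "rf (a + X + d + p - real_of_int (n+1) + 1) = rf (a + X + d + p - m)" by (rule rf_cong) (simp add: m_def)
    then show ?thesis using s3 by simp
  qed
  have x8: "rf (b + X + e + p - real_of_int (n+1) + 1) = (b + X + e + p - m + 1) * rf (b + X + e + p - m + 1)"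
  proof -
    have "rf (b + X + e + p - real_of_int (n+1) + 1) = rf (b + X + e + p - m)" by (rule rf_cong) (simp add: m_def)
    then show ?thesis using s4 by simp
  qed
  have x9: "recq a b X d e p (real_of_int (n+1)) = recq a b X d e p (m+1)" by (simp add: m_def)
  have g1: "recG a b X d e p (n+1) = K * (- (m+2)*(a+b+d+e-m)*(a+X+d+p-m+1)*(b+X+e+p-m+1)*recq a b X d e p (m+1))"
    unfolding recG_def x0 x1 x2 x3 x4 x5 x6 x7 x8 x9 unfolding K_def by (simp only: mult_ac mult_minus_left mult_minus_right)
  have poly: "- (m+2)*(a+b+d+e-m)*(a+X+d+p-m+1)*(b+X+e+p-m+1)*recq a b X d e p (m+1) - (m-a-b-X+1)*(m-X-d-e+1)*(m-b-d-p)*(m-a-e-p)*recq a b X d e p m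
   = X*recP a b X d e*((m-a-b-X)*(m-a-b-X+1)*(m-X-d-e)*(m-X-d-e+1)) + recF a b X d e p*((m-a-b-X+1)*(m-X-d-e+1)*(a+X+d+p-m+1)*(b+X+e+p-m+1)) + (X+1)*recQ a b X d e*((a+X+d+p-m)*(a+X+d+p-m+1)*(b+X+e+p-m)*(b+X+e+p-m+1))"
    by (rule rec_poly)
  have lin: "\<And>x1 y1 x2 y2 x3 y3 K :: real. x1 * (K * y1) + x2 * (K * y2) + x3 * (K * y3) = K * (x1 * y1 + x2 * y2 + x3 * y3)"
    by (simp add: algebra_simps)
  have lin2: "\<And>K u v :: real. K * u - K * v = K * (u - v)" by (simp add: algebra_simps)
  show ?thesis unfolding t0 t1 t2 g0 g1 lin lin2 poly[symmetric] by (simp only: mult.assoc)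
qed


lemma racah_rec:
  fixes a b X d e p :: real
  assumes "b + d + p \<ge> 0"
  shows "X * recP a b X d e * racah a b (X+1) d e p + recF a b X d e p * racah a b X d e p
     + (X+1) * recQ a b X d e * racah a b (X-1) d e p = 0"
proof -
  define N where "N = \<lceil>a+b+d+e\<rceil>"
  define G where "G = recG a b X d e p"
  have "X * recP a b X d e * racah a b (X+1) d e p + recF a b X d e p * racah a b X d e p
     + (X+1) * recQ a b X d e * racah a b (X-1) d e p
     = (\<Sum>n\<in>{-1..N}. X * recP a b X d e * rt a b (X+1) d e p n + recF a b X d e p * rt a b X d e p n
     + (X+1) * recQ a b X d e * rt a b (X-1) d e p n)"
    unfolding racah_def N_def by (simp add: sum.distrib sum_distrib_left)
  also have "\<dots> = (\<Sum>n\<in>{-1..N}. G (n+1) - G n)"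
    by (rule sum.cong) (simp_all add: G_def rec_pointwise)
  also have "\<dots> = 0"
  proof (cases "-1 \<le> N + 1")
    case True
    have g1: "G (N+1) = 0"
    proof -
      have "a + b + d + e - real_of_int (N+1) < 0" unfolding N_def
        by (simp add: algebra_simps) linarith
      then show ?thesis by (simp add: G_def recG_def rf_neg)
    qed
    have g2: "G (-1) = 0"
    proof -
      have "real_of_int (-1) - b - d - p - 1 < 0" using assms by simp
      then show ?thesis by (simp add: G_def recG_def rf_neg del: of_int_minus of_int_1)
    qed
    show ?thesis using telescope_int2[OF True, of G] g1 g2 by simp
  next
    case False
    then have "{-1..N} = {}" by auto
    then show ?thesis by simp
  qed
  finally show ?thesis .
qed


lemma rf_shift_neg: "rf (- x) = (1 - x) * rf (1 - x)"
  using rf_shift[of "-x"] by simp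

lemma lin_help: "(x1::real) + c*x2 = x3 - x4 \<Longrightarrow> K*x1 + c*(K*x2) = K*x3 - K*x4"
  by (metis right_diff_distrib distrib_left mult.left_commute)

lemma rec0_pointwise:
  fixes a d p :: real and n :: int
  assumes n: "n \<ge> -1"
  defines "c \<equiv> 2*(a*(a+1)+d*(d+1)-p*(p+1))"
  defines "G \<equiv> \<lambda>n::int. - (real_of_int n - (a+d+p)) * rt a a 1 d d p n"
  shows "rt a a 1 d d p n + c * rt a a 0 d d p n = G (n+1) - G n"
proof -
  define m where "m = real_of_int n"
  define u where "u = m - a - d - p"
  have m1: "m \<ge> -1" using n by (simp add: m_def)
  define K where "K = sg n * fr (m + 1) * rf (m - 2*a) * rf (m - 2*d) * rf (u+1) * rf (u+1) *
     rf (2*a + 2*d - m) * rf (1 - u) * rf (1 - u)"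
  have su: "rf u = (u+1) * rf (u+1)" by (rule rf_shift)
  have snu: "rf (-u) = (1-u) * rf (1-u)" by (rule rf_shift_neg)
  have e0: "rt a a 0 d d p n = K * ((u+1)*(u+1)*(1-u)*(1-u))"
  proof -
    have "rt a a 0 d d p n = sg n * fr (m+1) * rf (m - 2*a) * rf (m - 2*d) * rf u * rf u *
       rf (2*a+2*d-m) * rf (-u) * rf (-u)"
      unfolding rt_def m_def[symmetric] u_def by (simp add: algebra_simps)
    then show ?thesis unfolding su snu K_def by (simp only: mult_ac)
  qed
  have e1: "rt a a 1 d d p n = K * ((m-2*a)*(m-2*d)*(u+1)*(u+1))"
  proof -
    have r1: "rf (m - 2*a - 1) = (m - 2*a) * rf (m - 2*a)" by (rule rf_m1)
    have r2: "rf (m - 2*d - 1) = (m - 2*d) * rf (m - 2*d)" by (rule rf_m1)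
    have "rt a a 1 d d p n = sg n * fr (m+1) * rf (m - 2*a - 1) * rf (m - 2*d - 1) * rf u * rf u *
       rf (2*a+2*d-m) * rf (1-u) * rf (1-u)"
      unfolding rt_def m_def[symmetric] u_def by (simp add: algebra_simps)
    then show ?thesis unfolding su r1 r2 K_def by (simp only: mult_ac)
  qed
  have e2: "rt a a 1 d d p (n+1) = K * (- (m+2)*(2*a+2*d-m)*(1-u)*(1-u))"
  proof -
    have f1: "fr (m + 1 + 1) = (m + 2) * fr (m + 1)"
      using fr_shift[of "m+1"] m1 by (simp add: algebra_simps)
    have r3: "rf (2*a+2*d-m-1) = (2*a+2*d-m) * rf (2*a+2*d-m)" by (rule rf_m1)
    have "rt a a 1 d d p (n+1) = sg (n+1) * fr (m+1+1) * rf (m - 2*a) * rf (m - 2*d) * rf (u+1) * rf (u+1) *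
       rf (2*a+2*d-m-1) * rf (-u) * rf (-u)"
      unfolding rt_def u_def by (simp add: m_def algebra_simps)
    then show ?thesis unfolding sg_succ f1 r3 snu K_def by (simp only: mult_ac mult_minus_left mult_minus_right)
  qed
  have G0: "G n = K * (- u * ((m-2*a)*(m-2*d)*(u+1)*(u+1)))"
  proof -
    have "real_of_int n - (a+d+p) = u" by (simp add: u_def m_def)
    then have "G n = - u * rt a a 1 d d p n" unfolding G_def by (metis mult_minus_left)
    also have "\<dots> = K * (- u * ((m-2*a)*(m-2*d)*(u+1)*(u+1)))" unfolding e1
      by (simp only: mult_ac mult_minus_left mult_minus_right minus_minus)
    finally show ?thesis .
  qed
  have G1: "G (n+1) = K * ((u+1) * ((m+2)*(2*a+2*d-m)*(1-u)*(1-u)))"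
  proof -
    have "real_of_int (n+1) - (a+d+p) = u + 1" by (simp add: u_def m_def)
    then have "G (n+1) = - (u+1) * rt a a 1 d d p (n+1)" unfolding G_def by (metis mult_minus_left)
    also have "\<dots> = K * ((u+1) * ((m+2)*(2*a+2*d-m)*(1-u)*(1-u)))" unfolding e2
      by (simp only: mult_ac mult_minus_left mult_minus_right minus_minus)
    finally show ?thesis .
  qed
  show ?thesis
  proof (cases "K = 0")
    case True then show ?thesis unfolding e0 e1 G0 G1 by simp
  next
    case False
    then have "rf (u+1) \<noteq> 0" "rf (1-u) \<noteq> 0" unfolding K_def by auto
    then have "u + 1 \<in> \<nat>" "1 - u \<in> \<nat>" by (auto simp: rf_nz_iff)
    then obtain i j :: nat where ij: "u + 1 = real i" "1 - u = real j" by (auto simp: Nats_real_iff)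
    then have "i + j = 2" by linarith
    then have "u = -1 \<or> u = 0 \<or> u = 1" using ij by (cases i; cases j) auto
    moreover have "m = u + a + d + p" by (simp add: u_def)
    ultimately have "(m-2*a)*(m-2*d)*(u+1)*(u+1) + c*((u+1)*(u+1)*(1-u)*(1-u))
      = (u+1) * ((m+2)*(2*a+2*d-m)*(1-u)*(1-u)) - (- u * ((m-2*a)*(m-2*d)*(u+1)*(u+1)))"
      unfolding c_def by (auto simp: algebra_simps)
    then show ?thesis unfolding e0 e1 G0 G1 by (rule lin_help)
  qed
qed

lemma racah_rec0:
  fixes a d p :: real
  assumes "a \<ge> 0" "d \<ge> 0" "p \<ge> 0"
  shows "racah a a 1 d d p + 2*(a*(a+1)+d*(d+1)-p*(p+1)) * racah a a 0 d d p = 0"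
proof -
  define N where "N = \<lceil>a+a+d+d\<rceil>"
  define c where "c = 2*(a*(a+1)+d*(d+1)-p*(p+1))"
  define G where "G = (\<lambda>n::int. - (real_of_int n - (a+d+p)) * rt a a 1 d d p n)"
  have "racah a a 1 d d p + c * racah a a 0 d d p = (\<Sum>n\<in>{-1..N}. rt a a 1 d d p n + c * rt a a 0 d d p n)"
    unfolding racah_def N_def by (simp add: sum.distrib sum_distrib_left)
  also have "\<dots> = (\<Sum>n\<in>{-1..N}. G (n+1) - G n)"
  proof (rule sum.cong)
    fix n assume "n \<in> {-1..N}"
    then have "n \<ge> -1" by simp
    from rec0_pointwise[OF this, of a d p] show "rt a a 1 d d p n + c * rt a a 0 d d p n = G (n+1) - G n"
      unfolding G_def c_def by simp
  qed simp
  also have "\<dots> = 0"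
  proof (cases "-1 \<le> N + 1")
    case True
    have g1: "G (N+1) = 0"
    proof -
      have "a + a + d + d - real_of_int (N+1) < 0" unfolding N_def
        by (simp add: algebra_simps) linarith
      then show ?thesis by (simp add: G_def rt_def rf_neg)
    qed
    have g2: "G (-1) = 0"
    proof -
      have "real_of_int (-1) - a - d - p < 0" using assms by simp
      then have "rf (real_of_int (-1) - a - d - p) = 0" by (rule rf_neg)
      then show ?thesis by (simp add: G_def rt_def)
    qed
    show ?thesis using telescope_int2[OF True, of G] g1 g2 by simp
  next
    case False
    then have "{-1..N} = {}" by auto
    then show ?thesis by simp
  qed
  finally show ?thesis unfolding c_def .
qed


definition tri :: "real \<Rightarrow> real \<Rightarrow> real \<Rightarrow> bool" where
  "tri x y z \<longleftrightarrow> x + y - z \<in> \<nat> \<and> x - y + z \<in> \<nat> \<and> - x + y + z \<in> \<nat>"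

definition Dsq :: "real \<Rightarrow> real \<Rightarrow> real \<Rightarrow> real" where
  "Dsq x y z = fr (x + y - z) * fr (x - y + z) * fr (- x + y + z) * rf (x + y + z + 1)"

lemma Nats_ge0: "(x::real) \<in> \<nat> \<Longrightarrow> x \<ge> 0"
  by (auto simp: Nats_real_iff)

lemma tri_ge: assumes "tri x y z" shows "x + y - z \<ge> 0" "x - y + z \<ge> 0" "- x + y + z \<ge> 0"
proof -
  have h: "x + y - z \<in> \<nat>" "x - y + z \<in> \<nat>" "- x + y + z \<in> \<nat>" using assms unfolding tri_def by blast+
  show "x + y - z \<ge> 0" by (rule Nats_ge0[OF h(1)])
  show "x - y + z \<ge> 0" by (rule Nats_ge0[OF h(2)])
  show "- x + y + z \<ge> 0" by (rule Nats_ge0[OF h(3)])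
qed

lemma tri_nonneg: assumes "tri x y z" shows "x \<ge> 0" "y \<ge> 0" "z \<ge> 0"
  using tri_ge[OF assms] by linarith+

lemma tri_sum: assumes "tri x y z" shows "x + y + z + 1 \<in> \<nat>"
proof -
  have h: "x + y - z \<in> \<nat>" "x - y + z \<in> \<nat>" "- x + y + z \<in> \<nat>" using assms unfolding tri_def by blast+
  have "(x + y - z) + (x - y + z) + (- x + y + z) + 1 \<in> \<nat>"
    by (intro Nats_add h Nats_1)
  then show ?thesis by (simp add: algebra_simps)
qed

lemma tri_le: assumes "tri x y z" shows "z \<le> x + y"
  using tri_ge[OF assms] by linarith

lemma Dsq_nz: assumes "tri x y z" shows "Dsq x y z \<noteq> 0"
proof -
  have h: "x + y - z \<in> \<nat>" "x - y + z \<in> \<nat>" "- x + y + z \<in> \<nat>" using assms unfolding tri_def by blast+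
  have "x + y + z + 1 \<in> \<nat>" by (rule tri_sum[OF assms])
  then show ?thesis using h unfolding Dsq_def by (simp only: mult_eq_0_iff fr_nz_iff rf_nz_iff de_Morgan_disj)
qed

lemma Dsq_nz_tri: assumes "Dsq x y z \<noteq> 0" shows "tri x y z"
proof -
  have "fr (x + y - z) \<noteq> 0" "fr (x - y + z) \<noteq> 0" "fr (- x + y + z) \<noteq> 0" using assms unfolding Dsq_def by auto
  then show ?thesis unfolding tri_def fr_nz_iff by blast
qed

lemma Dsq_perm1: "Dsq x y z = Dsq z y x"
  unfolding Dsq_def by (simp add: algebra_simps)
lemma Dsq_perm2: "Dsq x y z = Dsq y x z"
  unfolding Dsq_def by (simp add: algebra_simps)

lemma Dsq_shift:
  assumes "tri x y z" "tri x y (z+1)"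
  shows "Dsq x y z * ((x - y + z + 1) * (- x + y + z + 1)) = Dsq x y (z+1) * ((x + y - z) * (x + y + z + 2))"
proof -
  have h1: "x + y - (z+1) \<in> \<nat>" "x - y + z \<in> \<nat>" "- x + y + z \<in> \<nat>"
    using assms by (auto simp: tri_def)
  have f1: "fr (x + y - z) = (x + y - z) * fr (x + y - (z+1))"
  proof -
    have "x + y - (z+1) \<noteq> -1" using h1(1) Nats_ge0 by force
    from fr_shift[OF this] show ?thesis by (simp add: algebra_simps)
  qed
  have f2: "fr (x - y + (z+1)) = (x - y + z + 1) * fr (x - y + z)"
  proof -
    have "x - y + z \<noteq> -1" using h1(2) Nats_ge0 by force
    from fr_shift[OF this] show ?thesis by (simp add: algebra_simps)
  qed
  have f3: "fr (- x + y + (z+1)) = (- x + y + z + 1) * fr (- x + y + z)"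
  proof -
    have "- x + y + z \<noteq> -1" using h1(3) Nats_ge0 by force
    from fr_shift[OF this] show ?thesis by (simp add: algebra_simps)
  qed
  have r1: "rf (x + y + z + 1) = (x + y + z + 2) * rf (x + y + (z+1) + 1)"
    using rf_shift[of "x + y + z + 1"] by (simp add: algebra_simps)
  show ?thesis unfolding Dsq_def f1 f2 f3 r1 by (simp only: mult_ac)
qed

lemma racah_sym1: "racah a b c d e f = racah d b f a e c"
  unfolding racah_def rt_def by (simp add: algebra_simps)

lemma racah_sym2: "racah a b c d e f = racah b a c e d f"
  unfolding racah_def rt_def by (simp add: algebra_simps)

lemma racah_nz:
  assumes "racah a b c d e f \<noteq> 0"
  shows "tri a b c \<and> tri c d e \<and> tri b d f \<and> tri a e f"
proof -
  obtain n where "rt a b c d e f n \<noteq> 0"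
    using assms unfolding racah_def by (meson sum.neutral)
  then have h: "real_of_int n - a - b - c \<in> \<nat>" "real_of_int n - c - d - e \<in> \<nat>"
     "real_of_int n - b - d - f \<in> \<nat>" "real_of_int n - a - e - f \<in> \<nat>"
     "a + b + d + e - real_of_int n \<in> \<nat>" "a + c + d + f - real_of_int n \<in> \<nat>"
     "b + c + e + f - real_of_int n \<in> \<nat>"
    unfolding rt_def by (auto simp: rf_nz_iff)
  have s: "\<And>u v w. u \<in> \<nat> \<Longrightarrow> v \<in> \<nat> \<Longrightarrow> w = u + v \<Longrightarrow> (w::real) \<in> \<nat>"
    by (simp add: Nats_add)
  have t1: "a + b - c \<in> \<nat>" by (rule s[OF h(5) h(2)]) simp
  have t2: "a - b + c \<in> \<nat>" by (rule s[OF h(6) h(3)]) simp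
  have t3: "- a + b + c \<in> \<nat>" by (rule s[OF h(7) h(4)]) simp
  have t4: "c + d - e \<in> \<nat>" by (rule s[OF h(6) h(4)]) simp
  have t5: "c - d + e \<in> \<nat>" by (rule s[OF h(7) h(3)]) simp
  have t6: "- c + d + e \<in> \<nat>" by (rule s[OF h(5) h(1)]) simp
  have t7: "b + d - f \<in> \<nat>" by (rule s[OF h(5) h(4)]) simp
  have t8: "b - d + f \<in> \<nat>" by (rule s[OF h(7) h(2)]) simp
  have t9: "- b + d + f \<in> \<nat>" by (rule s[OF h(6) h(1)]) simp
  have t10: "a + e - f \<in> \<nat>" by (rule s[OF h(5) h(3)]) simp
  have t11: "a - e + f \<in> \<nat>" by (rule s[OF h(6) h(2)]) simp
  have t12: "- a + e + f \<in> \<nat>" by (rule s[OF h(7) h(1)]) simp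
  show ?thesis unfolding tri_def using t1 t2 t3 t4 t5 t6 t7 t8 t9 t10 t11 t12 by blast
qed


definition Hc :: "real \<Rightarrow> real \<Rightarrow> real \<Rightarrow> real \<Rightarrow> real \<Rightarrow> real" where
  "Hc a b d e X = (2*X+1)*(-(X*(X+1)) + a*(a+1)+b*(b+1)+d*(d+1)+e*(e+1)
      + (d*(d+1)-e*(e+1))*(a*(a+1)-b*(b+1))/(X*(X+1)))"

definition DD :: "real \<Rightarrow> real \<Rightarrow> real \<Rightarrow> real \<Rightarrow> real \<Rightarrow> real" where
  "DD a b d e X = Dsq a b X * Dsq X d e"

lemma rec_div_pos:
  fixes a b X d e p :: real
  assumes X: "X > 0" and bdp: "b + d + p \<ge> 0"
  shows "recP a b X d e / (X+1) * racah a b (X+1) d e p + Hc a b d e X * racah a b X d e p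
     + recQ a b X d e / X * racah a b (X-1) d e p = 2*(2*X+1)*(p*(p+1)) * racah a b X d e p"
proof -
  define R1 where "R1 = racah a b (X+1) d e p"
  define R0 where "R0 = racah a b X d e p"
  define Rm where "Rm = racah a b (X-1) d e p"
  define P where "P = recP a b X d e"
  define Q where "Q = recQ a b X d e"
  define H where "H = Hc a b d e X"
  have hF: "recF a b X d e p = X*(X+1)*H - 2*(2*X+1)*(p*(p+1))*(X*(X+1))"
  proof -
    have gen: "\<And>w c u z :: real. w \<noteq> 0 \<Longrightarrow> w * (c * (u + z / w)) = c * (w * u + z)"
      by (simp add: field_simps)
    have w: "X*(X+1) \<noteq> 0" using X by simp
    have "X*(X+1)*H = (2*X+1)*(X*(X+1)*(-(X*(X+1)) + a*(a+1)+b*(b+1)+d*(d+1)+e*(e+1))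
        + (d*(d+1)-e*(e+1))*(a*(a+1)-b*(b+1)))"
      unfolding H_def Hc_def by (rule gen[OF w])
    then show ?thesis unfolding recF_def by (simp add: algebra_simps)
  qed
  have rec: "X * P * R1 + recF a b X d e p * R0 + (X+1) * Q * Rm = 0"
    unfolding P_def Q_def R1_def R0_def Rm_def by (rule racah_rec[OF bdp])
  have a1: "X*(X+1)*(P/(X+1)*R1) = X*P*R1" using X by (simp add: field_simps)
  have a2: "X*(X+1)*(Q/X*Rm) = (X+1)*Q*Rm" using X by (simp add: field_simps)
  have "X*(X+1)*(P/(X+1)*R1 + H*R0 + Q/X*Rm - 2*(2*X+1)*(p*(p+1))*R0)
     = X*(X+1)*(P/(X+1)*R1) + X*(X+1)*(H*R0) + X*(X+1)*(Q/X*Rm) - X*(X+1)*(2*(2*X+1)*(p*(p+1))*R0)"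
    by (simp only: distrib_left right_diff_distrib)
  also have "\<dots> = X * P * R1 + recF a b X d e p * R0 + (X+1) * Q * Rm"
    unfolding a1 a2 hF by (simp add: algebra_simps)
  finally have "X*(X+1)*(P/(X+1)*R1 + H*R0 + Q/X*Rm - 2*(2*X+1)*(p*(p+1))*R0) = X * P * R1 + recF a b X d e p * R0 + (X+1) * Q * Rm" .
  then have "X*(X+1)*(P/(X+1)*R1 + H*R0 + Q/X*Rm - 2*(2*X+1)*(p*(p+1))*R0) = 0" using rec by simp
  then have "P/(X+1)*R1 + H*R0 + Q/X*Rm - 2*(2*X+1)*(p*(p+1))*R0 = 0" using X by simp
  then show ?thesis unfolding P_def Q_def H_def R1_def R0_def Rm_def by simp
qed

lemma rec_div_zero:
  fixes a d p :: real
  assumes "a \<ge> 0" "d \<ge> 0" "p \<ge> 0"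
  shows "recP a a 0 d d / (0+1) * racah a a (0+1) d d p + Hc a a d d 0 * racah a a 0 d d p
     + recQ a a 0 d d / 0 * racah a a (0-1) d d p = 2*(2*0+1)*(p*(p+1)) * racah a a 0 d d p"
proof -
  have "recP a a 0 d d = 1" by (simp add: recP_def)
  moreover have "Hc a a d d 0 = 2*(a*(a+1)) + 2*(d*(d+1))" by (simp add: Hc_def)
  moreover have "racah a a 1 d d p + 2*(a*(a+1)+d*(d+1)-p*(p+1)) * racah a a 0 d d p = 0"
    by (rule racah_rec0[OF assms])
  ultimately show ?thesis by (simp add: algebra_simps)
qed

lemma tri_perm1: "tri x y z \<longleftrightarrow> tri z y x"
  unfolding tri_def by (auto simp: algebra_simps)

lemma tri_zero: assumes "tri x y 0" shows "x = y"
proof -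
  have "x - y \<ge> 0" "y - x \<ge> 0" using tri_ge[OF assms] by simp_all
  then show ?thesis by simp
qed

lemma rec_all:
  fixes a b X d e p :: real
  assumes X: "X \<ge> 0" and D: "DD a b d e X \<noteq> 0" and nn: "a \<ge> 0" "b \<ge> 0" "d \<ge> 0" "e \<ge> 0" "p \<ge> 0"
  shows "recP a b X d e / (X+1) * racah a b (X+1) d e p + Hc a b d e X * racah a b X d e p
     + recQ a b X d e / X * racah a b (X-1) d e p = 2*(2*X+1)*(p*(p+1)) * racah a b X d e p"
proof (cases "X > 0")
  case True then show ?thesis using rec_div_pos nn by simp
next
  case False
  then have X0: "X = 0" using X by simp
  have t1: "tri a b 0" using D X0 Dsq_nz_tri unfolding DD_def by auto
  have t2: "tri 0 d e" using D X0 Dsq_nz_tri unfolding DD_def by auto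
  have ab: "a = b" using tri_zero[OF t1] .
  have t2': "tri e d 0" using t2 tri_perm1[of 0 d e] by simp
  have de: "d = e" using tri_zero[OF t2'] by simp
  show ?thesis using rec_div_zero[of a d p] nn unfolding X0 ab[symmetric] de[symmetric] by simp
qed

lemma DD_shift:
  assumes "tri a b Y" "tri Y d e" "tri a b (Y+1)" "tri (Y+1) d e"
  shows "DD a b d e Y * recP a b Y d e = DD a b d e (Y+1) * recQ a b (Y+1) d e"
proof -
  have E1: "Dsq a b Y * ((a - b + Y + 1) * (- a + b + Y + 1)) = Dsq a b (Y+1) * ((a + b - Y) * (a + b + Y + 2))"
    by (rule Dsq_shift[OF assms(1,3)])
  have E2: "Dsq e d Y * ((e - d + Y + 1) * (- e + d + Y + 1)) = Dsq e d (Y+1) * ((e + d - Y) * (e + d + Y + 2))"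
  proof -
    have "tri e d Y" using assms(2) tri_perm1[of Y d e] by simp
    moreover have "tri e d (Y+1)" using assms(4) tri_perm1[of "Y+1" d e] by simp
    ultimately show ?thesis by (rule Dsq_shift)
  qed
  have p1: "recP a b Y d e = ((a - b + Y + 1) * (- a + b + Y + 1)) * ((e - d + Y + 1) * (- e + d + Y + 1))"
    unfolding recP_def by (simp add: algebra_simps)
  have q1: "recQ a b (Y+1) d e = ((a + b - Y) * (a + b + Y + 2)) * ((e + d - Y) * (e + d + Y + 2))"
    unfolding recQ_def by (simp add: algebra_simps)
  have "DD a b d e Y * recP a b Y d e = (Dsq a b Y * ((a - b + Y + 1) * (- a + b + Y + 1))) * (Dsq e d Y * ((e - d + Y + 1) * (- e + d + Y + 1)))"
    unfolding DD_def p1 Dsq_perm1[of Y d e] by (simp only: mult_ac)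
  also have "\<dots> = (Dsq a b (Y+1) * ((a + b - Y) * (a + b + Y + 2))) * (Dsq e d (Y+1) * ((e + d - Y) * (e + d + Y + 2)))"
    unfolding E1 E2 ..
  also have "\<dots> = DD a b d e (Y+1) * recQ a b (Y+1) d e"
    unfolding DD_def q1 Dsq_perm1[of "Y+1" d e] by (simp only: mult_ac)
  finally show ?thesis .
qed


lemma racah_zero_big: "X > a + b \<Longrightarrow> racah a b X d e p = 0"
  using racah_nz tri_le by fastforce

lemma racah_zero_neg: "X < 0 \<Longrightarrow> racah a b X d e p = 0"
  using racah_nz tri_nonneg(3) by fastforce

lemma T3_eq_T1:
  fixes a b d e p q :: real and K :: nat
  assumes nn: "a \<ge> 0" "b \<ge> 0" and K: "2*(a+b)+2 \<le> real K"
  shows "(\<Sum>k\<in>{0..K}. DD a b d e (real k/2) * racah a b (real k/2) d e q *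
            (recQ a b (real k/2) d e / (real k/2) * racah a b (real k/2 - 1) d e p))
       = (\<Sum>k\<in>{0..K}. DD a b d e (real k/2) * racah a b (real k/2) d e p *
            (recP a b (real k/2) d e / (real k/2 + 1) * racah a b (real k/2 + 1) d e q))"
    (is "sum ?h _ = sum ?g _")
proof -
  have "2*(a+b) \<ge> 0" using nn by simp
  then have "real K \<ge> 2" using K by linarith
  then have K2: "K \<ge> 2" by simp
  have "sum ?h {0..K} = sum ?h {2..K}"
  proof (rule sum.mono_neutral_right)
    show "finite {0..K}" by simp
    show "{2..K} \<subseteq> {0..K}" by auto
    show "\<forall>i\<in>{0..K} - {2..K}. ?h i = 0"
    proof
      fix i assume "i \<in> {0..K} - {2..K}"
      then have "i = 0 \<or> i = 1" by auto
      then show "?h i = 0"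
      proof
        assume "i = 0" then show ?thesis by simp
      next
        assume i1: "i = 1"
        have "racah a b (real 1/2 - 1) d e p = 0" by (rule racah_zero_neg) simp
        then show ?thesis unfolding i1 by simp
      qed
    qed
  qed
  also have "\<dots> = (\<Sum>j\<in>{0..K-2}. ?h (j+2))"
  proof -
    have eq: "{0+2..(K-2)+2} = {2..K}" using K2 by simp
    have "sum ?h {0+2..(K-2)+2} = (\<Sum>j\<in>{0..K-2}. ?h (j+2))" by (rule sum.shift_bounds_cl_nat_ivl)
    then show ?thesis unfolding eq .
  qed
  also have "\<dots> = sum ?g {0..K-2}"
  proof (rule sum.cong[OF refl])
    fix j assume "j \<in> {0..K-2}"
    define y where "y = real j / 2"
    have y0: "y \<ge> 0" by (simp add: y_def)
    have xj: "real (j+2) / 2 = y + 1" by (simp add: y_def field_simps)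
    have xj1: "y + 1 - 1 = y" by simp
    show "?h (j+2) = ?g j"
    proof (cases "racah a b y d e p = 0 \<or> racah a b (y+1) d e q = 0")
      case True then show ?thesis unfolding xj xj1 y_def[symmetric] by auto
    next
      case False
      then have n1: "racah a b y d e p \<noteq> 0" and n2: "racah a b (y+1) d e q \<noteq> 0" by auto
      have "tri a b y" "tri y d e" using racah_nz[OF n1] by auto
      moreover have "tri a b (y+1)" "tri (y+1) d e" using racah_nz[OF n2] by auto
      ultimately have sh: "DD a b d e y * recP a b y d e = DD a b d e (y+1) * recQ a b (y+1) d e"
        by (rule DD_shift)
      have yy: "y + 1 \<noteq> 0" using y0 by simp
      have "?h (j+2) = (DD a b d e (y+1) * recQ a b (y+1) d e) * (racah a b (y+1) d e q * racah a b y d e p / (y+1))"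
        unfolding xj xj1 by (simp add: ac_simps)
      also have "\<dots> = (DD a b d e y * recP a b y d e) * (racah a b (y+1) d e q * racah a b y d e p / (y+1))"
        unfolding sh ..
      also have "\<dots> = ?g j" unfolding y_def[symmetric] by (simp add: ac_simps)
      finally show ?thesis .
    qed
  qed
  also have "\<dots> = sum ?g {0..K}"
  proof (rule sum.mono_neutral_left)
    show "finite {0..K}" by simp
    show "{0..K-2} \<subseteq> {0..K}" by auto
    show "\<forall>i\<in>{0..K} - {0..K-2}. ?g i = 0"
    proof
      fix i assume "i \<in> {0..K} - {0..K-2}"
      then have "i \<ge> K - 1" by auto
      then have "real i \<ge> real K - 1" using K2 by linarith
      then have "real i / 2 + 1 > a + b" using K by (simp add: field_simps)
      then have "racah a b (real i / 2 + 1) d e q = 0" by (rule racah_zero_big)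
      then show "?g i = 0" by simp
    qed
  qed
  finally show ?thesis .
qed


lemma key_sum:
  fixes a b d e p q :: real and K :: nat
  assumes nn: "a \<ge> 0" "b \<ge> 0" "d \<ge> 0" "e \<ge> 0" "p \<ge> 0"
  shows "(\<Sum>k\<in>{0..K}. DD a b d e (real k/2) * racah a b (real k/2) d e q *
            (recP a b (real k/2) d e / (real k/2 + 1) * racah a b (real k/2 + 1) d e p))
       + (\<Sum>k\<in>{0..K}. DD a b d e (real k/2) * racah a b (real k/2) d e q *
            (Hc a b d e (real k/2) * racah a b (real k/2) d e p))
       + (\<Sum>k\<in>{0..K}. DD a b d e (real k/2) * racah a b (real k/2) d e q *
            (recQ a b (real k/2) d e / (real k/2) * racah a b (real k/2 - 1) d e p))
       = 2*(p*(p+1)) * (\<Sum>k\<in>{0..K}. (2*(real k/2)+1) * DD a b d e (real k/2) *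
            racah a b (real k/2) d e p * racah a b (real k/2) d e q)"
proof -
  have "\<And>k. DD a b d e (real k/2) * racah a b (real k/2) d e q *
            (recP a b (real k/2) d e / (real k/2 + 1) * racah a b (real k/2 + 1) d e p)
       + DD a b d e (real k/2) * racah a b (real k/2) d e q *
            (Hc a b d e (real k/2) * racah a b (real k/2) d e p)
       + DD a b d e (real k/2) * racah a b (real k/2) d e q *
            (recQ a b (real k/2) d e / (real k/2) * racah a b (real k/2 - 1) d e p)
       = 2*(p*(p+1)) * ((2*(real k/2)+1) * DD a b d e (real k/2) *
            racah a b (real k/2) d e p * racah a b (real k/2) d e q)"
  proof -
    fix k :: nat
    define x where "x = real k / 2"
    have x0: "x \<ge> 0" by (simp add: x_def)
    show "?thesis k"
    proof (cases "DD a b d e x = 0")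
      case True then show ?thesis unfolding x_def[symmetric] by simp
    next
      case False
      have r: "recP a b x d e / (x+1) * racah a b (x+1) d e p + Hc a b d e x * racah a b x d e p
         + recQ a b x d e / x * racah a b (x-1) d e p = 2*(2*x+1)*(p*(p+1)) * racah a b x d e p"
        by (rule rec_all[OF x0 False nn])
      have "DD a b d e x * racah a b x d e q * (recP a b x d e / (x+1) * racah a b (x+1) d e p)
         + DD a b d e x * racah a b x d e q * (Hc a b d e x * racah a b x d e p)
         + DD a b d e x * racah a b x d e q * (recQ a b x d e / x * racah a b (x-1) d e p)
         = DD a b d e x * racah a b x d e q * (recP a b x d e / (x+1) * racah a b (x+1) d e p + Hc a b d e x * racah a b x d e p
         + recQ a b x d e / x * racah a b (x-1) d e p)" by (simp only: distrib_left)
      also have "\<dots> = DD a b d e x * racah a b x d e q * (2*(2*x+1)*(p*(p+1)) * racah a b x d e p)"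
        unfolding r ..
      also have "\<dots> = 2*(p*(p+1)) * ((2*x+1) * DD a b d e x * racah a b x d e p * racah a b x d e q)"
        by (simp only: mult_ac)
      finally show ?thesis unfolding x_def .
    qed
  qed
  then show ?thesis by (simp only: sum.distrib[symmetric] sum_distrib_left)
qed

lemma orth:
  fixes a b d e p q :: real and K :: nat
  assumes nn: "a \<ge> 0" "b \<ge> 0" "d \<ge> 0" "e \<ge> 0" "p \<ge> 0" "q \<ge> 0"
    and pq: "p \<noteq> q" and K: "2*(a+b)+2 \<le> real K"
  shows "(\<Sum>k\<in>{0..K}. (2*(real k/2)+1) * DD a b d e (real k/2) *
            racah a b (real k/2) d e p * racah a b (real k/2) d e q) = 0"
proof -
  define T1 where "T1 = (\<lambda>p q. \<Sum>k\<in>{0..K}. DD a b d e (real k/2) * racah a b (real k/2) d e q *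
            (recP a b (real k/2) d e / (real k/2 + 1) * racah a b (real k/2 + 1) d e p))"
  define T2 where "T2 = (\<lambda>p q. \<Sum>k\<in>{0..K}. DD a b d e (real k/2) * racah a b (real k/2) d e q *
            (Hc a b d e (real k/2) * racah a b (real k/2) d e p))"
  define T3 where "T3 = (\<lambda>p q. \<Sum>k\<in>{0..K}. DD a b d e (real k/2) * racah a b (real k/2) d e q *
            (recQ a b (real k/2) d e / (real k/2) * racah a b (real k/2 - 1) d e p))"
  define ip where "ip = (\<lambda>p q. \<Sum>k\<in>{0..K}. (2*(real k/2)+1) * DD a b d e (real k/2) *
            racah a b (real k/2) d e p * racah a b (real k/2) d e q)"
  have k1: "T1 p q + T2 p q + T3 p q = 2*(p*(p+1)) * ip p q"
    unfolding T1_def T2_def T3_def ip_def by (rule key_sum[OF nn(1-5)])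
  have k2: "T1 q p + T2 q p + T3 q p = 2*(q*(q+1)) * ip q p"
    unfolding T1_def T2_def T3_def ip_def by (rule key_sum[OF nn(1-4) nn(6)])
  have s1: "T3 p q = T1 q p" unfolding T1_def T3_def by (rule T3_eq_T1[OF nn(1,2) K])
  have s2: "T3 q p = T1 p q" unfolding T1_def T3_def by (rule T3_eq_T1[OF nn(1,2) K])
  have s3: "T2 p q = T2 q p" unfolding T2_def by (simp only: mult_ac)
  have s4: "ip p q = ip q p" unfolding ip_def by (simp only: mult_ac)
  have "2*(p*(p+1)) * ip p q = T1 p q + T2 p q + T3 p q" using k1 by simp
  also have "\<dots> = T1 q p + T2 q p + T3 q p" unfolding s1 s2 s3 by simp
  also have "\<dots> = 2*(q*(q+1)) * ip q p" by (rule k2)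
  also have "\<dots> = 2*(q*(q+1)) * ip p q" unfolding s4 ..
  finally have "2*(p*(p+1)) * ip p q = 2*(q*(q+1)) * ip p q" .
  then have "(p*(p+1) - q*(q+1)) * ip p q = 0" by (simp add: algebra_simps)
  moreover have "p*(p+1) - q*(q+1) \<noteq> 0"
  proof
    assume "p*(p+1) - q*(q+1) = 0"
    then have "(p - q) * (p + q + 1) = 0" by (simp add: algebra_simps)
    moreover have "p + q + 1 \<noteq> 0" using nn by simp
    ultimately show False using pq by simp
  qed
  ultimately show ?thesis unfolding ip_def by simp
qed


definition ipf :: "nat \<Rightarrow> real \<Rightarrow> real \<Rightarrow> real \<Rightarrow> real \<Rightarrow> (real \<Rightarrow> real) \<Rightarrow> (real \<Rightarrow> real) \<Rightarrow> real" where
  "ipf K a b d e f g = (\<Sum>k\<in>{0..K}. (2*(real k/2)+1) * DD a b d e (real k/2) * f (real k/2) * g (real k/2))"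

lemma ipf_lin3: "ipf K a b d e g (\<lambda>x. c1 * f1 x + c2 * f2 x + c3 * f3 x)
   = c1 * ipf K a b d e g f1 + c2 * ipf K a b d e g f2 + c3 * ipf K a b d e g f3"
  unfolding ipf_def by (simp add: sum.distrib sum_distrib_left algebra_simps)

lemma ipf_scale: "ipf K a b d e g (\<lambda>x. c * f x) = c * ipf K a b d e g f"
  unfolding ipf_def by (simp add: sum_distrib_left algebra_simps)

lemma ipf_comm: "ipf K a b d e f g = ipf K a b d e g f"
  unfolding ipf_def by (simp add: ac_simps)

lemma tri_rot: "tri x y z \<longleftrightarrow> tri z x y"
  unfolding tri_def by (auto simp: algebra_simps)

lemma tri_perm2: "tri x y z \<longleftrightarrow> tri y x z"
  unfolding tri_def by (auto simp: algebra_simps)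

lemma racah_range_zero:
  assumes "\<not> tri b d p" shows "racah a b x d e p = 0"
  using racah_nz assms by blast

lemma orth_gen:
  fixes a b d e p q :: real and K :: nat
  assumes nn: "a \<ge> 0" "b \<ge> 0" "d \<ge> 0" "e \<ge> 0" "p \<ge> 0"
    and pq: "p \<noteq> q" and K: "2*(a+b)+2 \<le> real K"
  shows "ipf K a b d e (\<lambda>x. racah a b x d e p) (\<lambda>x. racah a b x d e q) = 0"
proof (cases "q \<ge> 0")
  case True then show ?thesis unfolding ipf_def using orth[OF nn True pq K] by simp
next
  case False
  have "\<And>x. racah a b x d e q = 0"
  proof -
    fix x show "racah a b x d e q = 0"
    proof (rule racah_range_zero)
      show "\<not> tri b d q" using tri_nonneg(3)[of b d q] False by auto
    qed
  qed
  then show ?thesis unfolding ipf_def by simp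
qed

lemma dual_rec:
  fixes a b d e p x :: real
  assumes nn: "a \<ge> 0" "b \<ge> 0" "d \<ge> 0" "e \<ge> 0" "p \<ge> 0" "x \<ge> 0"
    and t: "tri b d p" "tri a e p"
  shows "recP d b p a e / (p+1) * racah a b x d e (p+1) + Hc d b a e p * racah a b x d e p
     + recQ d b p a e / p * racah a b x d e (p-1) = 2*(2*p+1)*(x*(x+1)) * racah a b x d e p"
proof -
  have "tri d b p" using t(1) tri_perm2 by blast
  moreover have "tri p a e" using t(2) tri_rot by blast
  ultimately have D: "DD d b a e p \<noteq> 0" unfolding DD_def using Dsq_nz by simp
  have "recP d b p a e / (p+1) * racah d b (p+1) a e x + Hc d b a e p * racah d b p a e x
     + recQ d b p a e / p * racah d b (p-1) a e x = 2*(2*p+1)*(x*(x+1)) * racah d b p a e x"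
    by (rule rec_all[OF nn(5) D nn(3) nn(2) nn(1) nn(4) nn(6)])
  then show ?thesis by (simp only: racah_sym1[of d b _ a e x])
qed

lemma norm_step:
  fixes a b d e p :: real and K :: nat
  assumes nn: "a \<ge> 0" "b \<ge> 0" "d \<ge> 0" "e \<ge> 0" "p \<ge> 0"
    and t: "tri b d p" "tri a e p" "tri b d (p+1)" "tri a e (p+1)"
    and K: "2*(a+b)+2 \<le> real K"
  defines "R \<equiv> \<lambda>q x. racah a b x d e q"
  shows "(2*(p+1)+1) * (Dsq b d (p+1) * Dsq a e (p+1)) * ipf K a b d e (R (p+1)) (R (p+1))
       = (2*p+1) * (Dsq b d p * Dsq a e p) * ipf K a b d e (R p) (R p)"
proof -
  have p1: "p + 1 \<ge> 0" using nn by simp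
  define Lam where "Lam = ipf K a b d e (R p) (\<lambda>x. x*(x+1) * R (p+1) x)"
  have A: "ipf K a b d e (R (p+1)) (\<lambda>x. recP d b p a e / (p+1) * R (p+1) x + Hc d b a e p * R p x
     + recQ d b p a e / p * R (p-1) x) = ipf K a b d e (R (p+1)) (\<lambda>x. 2*(2*p+1)*(x*(x+1) * R p x))"
    unfolding ipf_def
  proof (rule sum.cong[OF refl])
    fix k :: nat
    have x0: "real k / 2 \<ge> 0" by simp
    show "(2*(real k/2)+1) * DD a b d e (real k/2) * R (p+1) (real k/2) *
        (recP d b p a e / (p+1) * R (p+1) (real k/2) + Hc d b a e p * R p (real k/2)
     + recQ d b p a e / p * R (p-1) (real k/2)) =
       (2*(real k/2)+1) * DD a b d e (real k/2) * R (p+1) (real k/2) * (2*(2*p+1)*((real k/2)*(real k/2+1) * R p (real k/2)))"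
      using dual_rec[OF nn x0 t(1,2)] unfolding R_def by (simp add: ac_simps)
  qed
  have A1: "ipf K a b d e (R (p+1)) (R p) = 0"
    unfolding R_def by (rule orth_gen[OF nn(1-4) p1 _ K]) simp
  have A2: "ipf K a b d e (R (p+1)) (R (p-1)) = 0"
    unfolding R_def by (rule orth_gen[OF nn(1-4) p1 _ K]) simp
  have E1: "recP d b p a e / (p+1) * ipf K a b d e (R (p+1)) (R (p+1)) = 2*(2*p+1) * Lam"
  proof -
    have "recP d b p a e / (p+1) * ipf K a b d e (R (p+1)) (R (p+1))
        = recP d b p a e / (p+1) * ipf K a b d e (R (p+1)) (R (p+1)) + Hc d b a e p * ipf K a b d e (R (p+1)) (R p)
          + recQ d b p a e / p * ipf K a b d e (R (p+1)) (R (p-1))" using A1 A2 by simp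
    also have "\<dots> = ipf K a b d e (R (p+1)) (\<lambda>x. 2*(2*p+1)*(x*(x+1) * R p x))"
      using A ipf_lin3[of K a b d e "R (p+1)" "recP d b p a e / (p+1)" "R (p+1)" "Hc d b a e p" "R p" "recQ d b p a e / p" "R (p-1)"]
      by simp
    also have "\<dots> = 2*(2*p+1) * Lam"
      unfolding ipf_scale Lam_def ipf_def by (simp add: ac_simps)
    finally show ?thesis .
  qed
  have B: "ipf K a b d e (R p) (\<lambda>x. recP d b (p+1) a e / (p+1+1) * R (p+1+1) x + Hc d b a e (p+1) * R (p+1) x
     + recQ d b (p+1) a e / (p+1) * R (p+1-1) x) = ipf K a b d e (R p) (\<lambda>x. 2*(2*(p+1)+1)*(x*(x+1) * R (p+1) x))"
    unfolding ipf_def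
  proof (rule sum.cong[OF refl])
    fix k :: nat
    have x0: "real k / 2 \<ge> 0" by simp
    show "(2*(real k/2)+1) * DD a b d e (real k/2) * R p (real k/2) *
        (recP d b (p+1) a e / (p+1+1) * R (p+1+1) (real k/2) + Hc d b a e (p+1) * R (p+1) (real k/2)
     + recQ d b (p+1) a e / (p+1) * R (p+1-1) (real k/2)) =
       (2*(real k/2)+1) * DD a b d e (real k/2) * R p (real k/2) * (2*(2*(p+1)+1)*((real k/2)*(real k/2+1) * R (p+1) (real k/2)))"
      using dual_rec[OF nn(1-4) p1 x0 t(3,4)] unfolding R_def by (simp add: ac_simps)
  qed
  have B1: "ipf K a b d e (R p) (R (p+1+1)) = 0"
    unfolding R_def by (rule orth_gen[OF nn(1-5) _ K]) simp
  have B2: "ipf K a b d e (R p) (R (p+1)) = 0"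
    unfolding R_def by (rule orth_gen[OF nn(1-5) _ K]) simp
  have E2: "recQ d b (p+1) a e / (p+1) * ipf K a b d e (R p) (R p) = 2*(2*(p+1)+1) * Lam"
  proof -
    have "recQ d b (p+1) a e / (p+1) * ipf K a b d e (R p) (R p)
        = recP d b (p+1) a e / (p+1+1) * ipf K a b d e (R p) (R (p+1+1)) + Hc d b a e (p+1) * ipf K a b d e (R p) (R (p+1))
          + recQ d b (p+1) a e / (p+1) * ipf K a b d e (R p) (R (p+1-1))" using B1 B2 by simp
    also have "\<dots> = ipf K a b d e (R p) (\<lambda>x. 2*(2*(p+1)+1)*(x*(x+1) * R (p+1) x))"
      using B ipf_lin3[of K a b d e "R p" "recP d b (p+1) a e / (p+1+1)" "R (p+1+1)" "Hc d b a e (p+1)" "R (p+1)" "recQ d b (p+1) a e / (p+1)" "R (p+1-1)"]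
      by simp
    also have "\<dots> = 2*(2*(p+1)+1) * Lam"
      unfolding ipf_scale Lam_def ..
    finally show ?thesis .
  qed
  have sh: "DD d b a e p * recP d b p a e = DD d b a e (p+1) * recQ d b (p+1) a e"
  proof (rule DD_shift)
    show "tri d b p" using t(1) tri_perm2 by blast
    show "tri p a e" using t(2) tri_rot by blast
    show "tri d b (p+1)" using t(3) tri_perm2 by blast
    show "tri (p+1) a e" using t(4) tri_rot by blast
  qed
  have DDp: "\<And>z. DD d b a e z = Dsq b d z * Dsq a e z"
    unfolding DD_def using Dsq_perm2 Dsq_perm1 by (metis mult.commute)
  have Qpos: "recQ d b (p+1) a e > 0"
  proof -
    have "p + 1 \<le> b + d" using tri_le[OF t(3)] .
    moreover have "p + 1 \<le> a + e" using tri_le[OF t(4)] .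
    ultimately show ?thesis unfolding recQ_def using nn by (simp add: mult_pos_pos)
  qed
  define nu1 where "nu1 = ipf K a b d e (R (p+1)) (R (p+1))"
  define nu0 where "nu0 = ipf K a b d e (R p) (R p)"
  define P' where "P' = recP d b p a e"
  define Q' where "Q' = recQ d b (p+1) a e"
  have pp: "p + 1 > 0" using nn by simp
  have gen: "\<And>u v w :: real. w > 0 \<Longrightarrow> u / w * v = c \<Longrightarrow> u * v = c * w" for c
    by (simp add: field_simps)
  have e1: "P' * nu1 = 2*(2*p+1)*(p+1) * Lam" using gen[OF pp E1] unfolding P'_def nu1_def
    by (simp add: algebra_simps)
  have e2: "Q' * nu0 = 2*(2*p+3)*(p+1) * Lam" using gen[OF pp E2] unfolding Q'_def nu0_def
    by (simp add: algebra_simps)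
  have "(2*p+3) * P' * nu1 = (2*p+3) * (P' * nu1)" by simp
  also have "\<dots> = (2*p+3) * (2*(2*p+1)*(p+1) * Lam)" unfolding e1 ..
  also have "\<dots> = (2*p+1) * (2*(2*p+3)*(p+1) * Lam)" by (simp add: algebra_simps)
  also have "\<dots> = (2*p+1) * (Q' * nu0)" unfolding e2 ..
  finally have "(2*p+3) * P' * nu1 = (2*p+1) * Q' * nu0" by simp
  note main = this
  have sh': "(Dsq b d (p+1) * Dsq a e (p+1)) * Q' = (Dsq b d p * Dsq a e p) * P'"
    using sh unfolding DDp P'_def Q'_def by simp
  have "(2*p+3) * (Dsq b d (p+1) * Dsq a e (p+1)) * Q' * nu1 = (2*p+3) * ((Dsq b d (p+1) * Dsq a e (p+1)) * Q') * nu1"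
    by (simp only: mult.assoc)
  also have "\<dots> = (2*p+3) * ((Dsq b d p * Dsq a e p) * P') * nu1" unfolding sh' ..
  also have "\<dots> = (Dsq b d p * Dsq a e p) * ((2*p+3) * P' * nu1)" by (simp only: mult_ac)
  also have "\<dots> = (Dsq b d p * Dsq a e p) * ((2*p+1) * Q' * nu0)" unfolding main ..
  also have "\<dots> = (2*p+1) * (Dsq b d p * Dsq a e p) * Q' * nu0" by (simp only: mult_ac)
  finally have "(2*p+3) * (Dsq b d (p+1) * Dsq a e (p+1)) * Q' * nu1 = (2*p+1) * (Dsq b d p * Dsq a e p) * Q' * nu0" .
  then have "((2*p+3) * (Dsq b d (p+1) * Dsq a e (p+1)) * nu1) * Q' = ((2*p+1) * (Dsq b d p * Dsq a e p) * nu0) * Q'"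
    by (simp add: ac_simps)
  then have "(2*p+3) * (Dsq b d (p+1) * Dsq a e (p+1)) * nu1 = (2*p+1) * (Dsq b d p * Dsq a e p) * nu0"
    using Qpos unfolding Q'_def by simp
  then show ?thesis unfolding nu1_def nu0_def by (simp add: algebra_simps)
qed


definition fb :: "real \<Rightarrow> real \<Rightarrow> real \<Rightarrow> real \<Rightarrow> real \<Rightarrow> real" where
  "fb a b d e x = (2*x+1) * fr (a - b + x) * fr (x - d + e) * rf (a + b + x + 1) * rf (x + d + e + 1) *
     rf (d + e - x) * rf (a + b - x) * rf (x + d - e) * rf (x + b - a)"

definition rb :: "real \<Rightarrow> real \<Rightarrow> real \<Rightarrow> real \<Rightarrow> real" where
  "rb a b d e = fr (a + e - b - d) * fr (2*b + 2*d) * rf (2*b) * rf (2*d) * rf (a + b + d - e) *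
     rf (b + d + e - a) * rf (a + b + d + e + 1)"

definition Gw :: "real \<Rightarrow> real \<Rightarrow> real \<Rightarrow> real \<Rightarrow> real \<Rightarrow> real" where
  "Gw a b d e x = - (fr (a - b + x) * fr (x - d + e) * rf (x + b - a - 1) * rf (x + d - e - 1) *
     rf (a + b + 1 - x) * rf (a + b + x + 1) * rf (d + e - x) * rf (d + e + x))"

lemma fr_cong: "x = y \<Longrightarrow> fr x = fr y" by simp

lemma wz_poly:
  fixes a b d e x :: real
  shows "(2*b+1)*(a+b+d-e+1)*(a+b+d+e+2)*(2*x+1) - (2*b+2*d+1)*((2*x+1)*(a+b+x+2)*(a+b-x+1))
    = - (a-b+x+1)*(x-d+e+1)*(a+b-x+1)*(d+e-x) + (x+b-a)*(x+d-e)*(a+b+x+2)*(x+d+e+1)"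
  by algebra

lemma wz_pointwise:
  fixes a b d e x :: real
  assumes st: "a - b + e - d \<ge> 0"
  shows "(2*b+1)*(a+b+d-e+1)*(a+b+d+e+2) * fb (a+1/2) (b+1/2) d e x - (2*b+2*d+1) * fb a b d e x
     = Gw a b d e (x+1) - Gw a b d e x"
proof (cases "a - b + x = -1 \<or> x - d + e = -1")
  case True
  have z1: "fb (a+1/2) (b+1/2) d e x = 0" and z2: "fb a b d e x = 0" and z3: "Gw a b d e x = 0"
    using True unfolding fb_def Gw_def by (auto simp: fr_neg algebra_simps)
  have z4: "Gw a b d e (x+1) = 0"
  proof (cases "a - b + x = -1")
    case True
    then have "x + 1 + d - e - 1 < 0" using st by linarith
    then show ?thesis unfolding Gw_def by (simp add: rf_neg)
  next
    case False
    then have "x - d + e = -1" using \<open>a - b + x = -1 \<or> x - d + e = -1\<close> by simp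
    then have "x + 1 + b - a - 1 < 0" using st by linarith
    then show ?thesis unfolding Gw_def by (simp add: rf_neg)
  qed
  show ?thesis using z1 z2 z3 z4 by simp
next
  case False
  then have n1: "a - b + x \<noteq> -1" and n2: "x - d + e \<noteq> -1" by auto
  define K where "K = fr (a - b + x) * fr (x - d + e) * rf (x + b - a) * rf (x + d - e) *
     rf (a + b + 1 - x) * rf (a + b + x + 2) * rf (d + e - x) * rf (x + d + e + 1)"
  have r1: "rf (a + b + x + 1) = (a + b + x + 2) * rf (a + b + x + 2)"
    using rf_shift[of "a + b + x + 1"] by (simp add: algebra_simps)
  have r2: "rf (a + b - x) = (a + b - x + 1) * rf (a + b + 1 - x)"
    using rf_shift[of "a + b - x"] by (simp add: algebra_simps)
  have F0: "fb a b d e x = K * ((2*x+1)*(a+b+x+2)*(a+b-x+1))"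
    unfolding fb_def r1 r2 K_def by (simp only: mult_ac)
  have F1: "fb (a+1/2) (b+1/2) d e x = K * (2*x+1)"
  proof -
    have "fb (a+1/2) (b+1/2) d e x = (2*x+1) * fr (a - b + x) * fr (x - d + e) * rf (a + b + x + 2) * rf (x + d + e + 1) *
     rf (d + e - x) * rf (a + b + 1 - x) * rf (x + d - e) * rf (x + b - a)"
      unfolding fb_def by (simp add: algebra_simps)
    then show ?thesis unfolding K_def by (simp only: mult_ac)
  qed
  have r3: "rf (x + b - a - 1) = (x + b - a) * rf (x + b - a)" by (rule rf_m1)
  have r4: "rf (x + d - e - 1) = (x + d - e) * rf (x + d - e)" by (rule rf_m1)
  have r5: "rf (d + e + x) = (x + d + e + 1) * rf (x + d + e + 1)"
    using rf_shift[of "d + e + x"] by (simp add: algebra_simps)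
  have G0: "Gw a b d e x = - (K * ((x+b-a)*(x+d-e)*(a+b+x+2)*(x+d+e+1)))"
    unfolding Gw_def r1 r3 r4 r5 K_def by (simp only: mult_ac)
  have f1: "fr (a - b + (x+1)) = (a - b + x + 1) * fr (a - b + x)"
    using fr_shift[OF n1] by (simp add: algebra_simps)
  have f2: "fr (x + 1 - d + e) = (x - d + e + 1) * fr (x - d + e)"
    using fr_shift[OF n2] by (simp add: algebra_simps)
  have q1: "rf (x + 1 + b - a - 1) = rf (x + b - a)" by (rule rf_cong) simp
  have q2: "rf (x + 1 + d - e - 1) = rf (x + d - e)" by (rule rf_cong) simp
  have q3: "rf (a + b + 1 - (x + 1)) = (a + b - x + 1) * rf (a + b + 1 - x)"
    using r2 by (simp add: algebra_simps)
  have q4: "rf (a + b + (x + 1) + 1) = rf (a + b + x + 2)" by (rule rf_cong) simp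
  have q5: "rf (d + e - (x + 1)) = (d + e - x) * rf (d + e - x)"
    using rf_m1[of "d + e - x"] by (simp add: algebra_simps)
  have q6: "rf (d + e + (x + 1)) = rf (x + d + e + 1)" by (rule rf_cong) simp
  have G1: "Gw a b d e (x+1) = - (K * ((a-b+x+1)*(x-d+e+1)*(a+b-x+1)*(d+e-x)))"
    unfolding Gw_def f1 f2 q1 q2 q3 q4 q5 q6 K_def by (simp only: mult_ac)
  have lin: "\<And>c1 c0 u v w z :: real. c1 * (K * u) - c0 * (K * v) = K * (c1 * u - c0 * v)"
    by (simp add: algebra_simps)
  have lin2: "\<And>u v :: real. - (K * u) - - (K * v) = K * (- u + v)"
    by (simp add: algebra_simps)
  show ?thesis unfolding F0 F1 G0 G1 lin lin2 wz_poly by (simp only: mult_minus_left)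
qed

lemma tel2:
  fixes g :: "nat \<Rightarrow> real"
  shows "(\<Sum>k\<in>{0..K}. g (k+2) - g k) = g (K+1) + g (K+2) - g 0 - g 1"
  by (induction K) (simp_all add: algebra_simps)

lemma wz_sum:
  fixes a b d e :: real and K :: nat
  assumes st: "a - b + e - d \<ge> 0" and K: "2*(a+b) + 3 \<le> real K"
  shows "(2*b+1)*(a+b+d-e+1)*(a+b+d+e+2) * (\<Sum>k\<in>{0..K}. fb (a+1/2) (b+1/2) d e (real k/2))
       = (2*b+2*d+1) * (\<Sum>k\<in>{0..K}. fb a b d e (real k/2))"
proof -
  define g where "g = (\<lambda>k::nat. Gw a b d e (real k / 2))"
  have "(2*b+1)*(a+b+d-e+1)*(a+b+d+e+2) * (\<Sum>k\<in>{0..K}. fb (a+1/2) (b+1/2) d e (real k/2))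
       - (2*b+2*d+1) * (\<Sum>k\<in>{0..K}. fb a b d e (real k/2))
       = (\<Sum>k\<in>{0..K}. (2*b+1)*(a+b+d-e+1)*(a+b+d+e+2) * fb (a+1/2) (b+1/2) d e (real k/2)
            - (2*b+2*d+1) * fb a b d e (real k/2))"
    by (simp add: sum_distrib_left sum_subtractf)
  also have "\<dots> = (\<Sum>k\<in>{0..K}. g (k+2) - g k)"
  proof (rule sum.cong[OF refl])
    fix k :: nat
    have eqg: "g (k+2) = Gw a b d e (real k / 2 + 1)" unfolding g_def
      by (rule arg_cong[where f="Gw a b d e"]) simp
    show "(2*b+1)*(a+b+d-e+1)*(a+b+d+e+2) * fb (a+1/2) (b+1/2) d e (real k/2)
            - (2*b+2*d+1) * fb a b d e (real k/2) = g (k+2) - g k"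
      unfolding eqg using wz_pointwise[OF st, of "real k / 2"] by (simp add: g_def)
  qed
  also have "\<dots> = g (K+1) + g (K+2) - g 0 - g 1" by (rule tel2)
  also have "\<dots> = 0"
  proof -
    have zlow: "\<And>x. x \<le> 1/2 \<Longrightarrow> Gw a b d e x = 0"
    proof -
      fix x :: real assume x: "x \<le> 1/2"
      have "x + b - a - 1 < 0 \<or> x + d - e - 1 < 0" using st x by linarith
      then show "Gw a b d e x = 0" unfolding Gw_def by (auto simp: rf_neg)
    qed
    have zhigh: "\<And>x. x > a + b + 1 \<Longrightarrow> Gw a b d e x = 0"
    proof -
      fix x :: real assume "x > a + b + 1"
      then have "a + b + 1 - x < 0" by simp
      then show "Gw a b d e x = 0" unfolding Gw_def by (simp add: rf_neg)
    qed
    have "g 0 = 0" unfolding g_def by (rule zlow) simp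
    moreover have "g 1 = 0" unfolding g_def by (rule zlow) simp
    moreover have "g (K+1) = 0" unfolding g_def by (rule zhigh) (use K in simp)
    moreover have "g (K+2) = 0" unfolding g_def by (rule zhigh) (use K in simp)
    ultimately show ?thesis by simp
  qed
  finally show ?thesis by simp
qed

lemma rb_step:
  fixes a b d e :: real
  assumes "b \<ge> 0" "d \<ge> 0"
  shows "(2*b+1)*(a+b+d-e+1)*(a+b+d+e+2) * rb (a+1/2) (b+1/2) d e = (2*b+2*d+1) * rb a b d e"
proof -
  have n: "2*b + 2*d \<noteq> -1" using assms by simp
  have h1: "fr (2*(b+1/2) + 2*d) = (2*b+2*d+1) * fr (2*b + 2*d)"
    using fr_shift[OF n] by (simp add: algebra_simps)
  have h2: "rf (2*b) = (2*b+1) * rf (2*(b+1/2))"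
    using rf_shift[of "2*b"] by (simp add: algebra_simps)
  have h3: "rf (a + b + d - e) = (a+b+d-e+1) * rf ((a+1/2) + (b+1/2) + d - e)"
    using rf_shift[of "a + b + d - e"] by (simp add: algebra_simps)
  have h4: "rf (a + b + d + e + 1) = (a+b+d+e+2) * rf ((a+1/2) + (b+1/2) + d + e + 1)"
    using rf_shift[of "a + b + d + e + 1"] by (simp add: algebra_simps)
  have h5: "fr ((a+1/2) + e - (b+1/2) - d) = fr (a + e - b - d)" by (rule fr_cong) simp
  have h6: "rf ((b+1/2) + d + e - (a+1/2)) = rf (b + d + e - a)" by (rule rf_cong) simp
  show ?thesis unfolding rb_def h1 h2 h3 h4 h5 h6 by (simp only: mult_ac)
qed


lemma rf_zero [simp]: "rf 0 = 1" by (simp add: rf_def)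
lemma fr_zero [simp]: "fr 0 = 1" by (simp add: fr_def)

lemma fb_sum_ind:
  fixes a0 b0 d e :: real and K :: nat
  assumes nn: "a0 \<ge> 0" "b0 \<ge> 0" "d \<ge> 0" "e \<ge> 0" and st: "a0 - b0 + e - d \<ge> 0"
    and cond: "a0 + b0 + d - e \<ge> 0"
    and base: "(\<Sum>k\<in>{0..K}. fb a0 b0 d e (real k/2)) = rb a0 b0 d e"
  shows "2*(a0+b0+real j)+3 \<le> real K \<Longrightarrow>
    (\<Sum>k\<in>{0..K}. fb (a0 + real j/2) (b0 + real j/2) d e (real k/2)) = rb (a0 + real j/2) (b0 + real j/2) d e"
proof (induction j)
  case 0 then show ?case using base by simp
next
  case (Suc j)
  define a where "a = a0 + real j / 2"
  define b where "b = b0 + real j / 2"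
  have IH: "(\<Sum>k\<in>{0..K}. fb a b d e (real k/2)) = rb a b d e"
    unfolding a_def b_def using Suc by simp
  have ea: "a0 + real (Suc j) / 2 = a + 1/2" by (simp add: a_def field_simps)
  have eb: "b0 + real (Suc j) / 2 = b + 1/2" by (simp add: b_def field_simps)
  have st': "a - b + e - d \<ge> 0" using st by (simp add: a_def b_def)
  have K': "2*(a+b) + 3 \<le> real K" using Suc.prems by (simp add: a_def b_def)
  have b0': "b \<ge> 0" using nn by (simp add: b_def)
  have C1: "(2*b+1)*(a+b+d-e+1)*(a+b+d+e+2) > 0"
  proof -
    have "a + b + d - e \<ge> 0" using cond by (simp add: a_def b_def)
    moreover have "a \<ge> 0" using nn by (simp add: a_def)
    ultimately show ?thesis using b0' nn by (simp add: mult_pos_pos)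
  qed
  have "(2*b+1)*(a+b+d-e+1)*(a+b+d+e+2) * (\<Sum>k\<in>{0..K}. fb (a+1/2) (b+1/2) d e (real k/2))
      = (2*b+2*d+1) * rb a b d e" using wz_sum[OF st' K'] IH by simp
  also have "\<dots> = (2*b+1)*(a+b+d-e+1)*(a+b+d+e+2) * rb (a+1/2) (b+1/2) d e"
    using rb_step[OF b0' nn(3)] by simp
  finally have eq: "(2*b+1)*(a+b+d-e+1)*(a+b+d+e+2) * (\<Sum>k\<in>{0..K}. fb (a+1/2) (b+1/2) d e (real k/2))
     = (2*b+1)*(a+b+d-e+1)*(a+b+d+e+2) * rb (a+1/2) (b+1/2) d e" .
  have C1ne: "(2*b+1)*(a+b+d-e+1)*(a+b+d+e+2) \<noteq> 0" using C1 by linarith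
  have "(\<Sum>k\<in>{0..K}. fb (a+1/2) (b+1/2) d e (real k/2)) = rb (a+1/2) (b+1/2) d e"
    using mult_left_cancel[OF C1ne] eq by blast
  then show ?case unfolding ea eb .
qed

lemma fb_nz:
  assumes "fb a b d e x \<noteq> 0"
  shows "x + b - a \<ge> 0" "a + b - x \<ge> 0" "x + d - e \<ge> 0"
proof -
  have "rf (x + b - a) \<noteq> 0" "rf (a + b - x) \<noteq> 0" "rf (x + d - e) \<noteq> 0"
    using assms unfolding fb_def by auto
  then have h: "x + b - a \<in> \<nat>" "a + b - x \<in> \<nat>" "x + d - e \<in> \<nat>" by (simp_all add: rf_nz_iff)
  show "x + b - a \<ge> 0" by (rule Nats_ge0[OF h(1)])
  show "a + b - x \<ge> 0" by (rule Nats_ge0[OF h(2)])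
  show "x + d - e \<ge> 0" by (rule Nats_ge0[OF h(3)])
qed

lemma sum_single_half:
  fixes f :: "real \<Rightarrow> real" and K m :: nat
  assumes "m \<le> K" and z: "\<And>k. k \<noteq> m \<Longrightarrow> f (real k / 2) = 0"
  shows "(\<Sum>k\<in>{0..K}. f (real k / 2)) = f (real m / 2)"
proof -
  have "(\<Sum>k\<in>{0..K}. f (real k / 2)) = (\<Sum>k\<in>{m}. f (real k / 2))"
  proof (rule sum.mono_neutral_right)
    show "finite {0..K}" by simp
    show "{m} \<subseteq> {0..K}" using assms(1) by simp
    show "\<forall>i\<in>{0..K} - {m}. f (real i / 2) = 0" using z by simp
  qed
  then show ?thesis by simp
qed

lemma fr_rf_succ: assumes "x \<in> \<nat>" shows "(x+1) * fr x * rf (x+1) = 1"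
proof -
  have "(x+1) * fr x * rf (x+1) = fr x * ((x+1) * rf (x+1))" by (simp only: mult_ac)
  also have "\<dots> = fr x * rf x" using rf_shift[of x] by simp
  also have "\<dots> = 1" by (rule fr_rf[OF assms])
  finally show ?thesis .
qed

lemma fb_base1:
  fixes s d e :: real and K :: nat
  assumes s: "2*s = real m" and d: "2*d \<in> \<nat>" and sde: "s + d - e \<ge> 0" and K: "m \<le> K"
  shows "(\<Sum>k\<in>{0..K}. fb s 0 d e (real k/2)) = rb s 0 d e"
proof -
  have "(\<Sum>k\<in>{0..K}. fb s 0 d e (real k/2)) = fb s 0 d e (real m / 2)"
  proof (rule sum_single_half[OF K])
    fix k assume k: "k \<noteq> m"
    show "fb s 0 d e (real k / 2) = 0"
    proof (rule ccontr)
      assume "fb s 0 d e (real k / 2) \<noteq> 0"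
      from fb_nz[OF this] have "real k / 2 = s" by simp
      then show False using k s by simp
    qed
  qed
  also have "real m / 2 = s" using s by simp
  also have "fb s 0 d e s = rb s 0 d e"
  proof -
    have sN: "2*s \<in> \<nat>" using s by simp
    have h1: "(2*s+1) * fr (2*s) * rf (2*s+1) = 1" by (rule fr_rf_succ[OF sN])
    have h2: "fr (2*d) * rf (2*d) = 1" using fr_rf[OF d] .
    have "fb s 0 d e s = ((2*s+1) * fr (2*s) * rf (2*s+1)) * fr (s + e - d) * rf (s + d + e + 1) * rf (d + e - s) * rf (s + d - e)"
      unfolding fb_def by (simp add: algebra_simps)
    also have "rb s 0 d e = (fr (2*d) * rf (2*d)) * fr (s + e - d) * rf (s + d + e + 1) * rf (d + e - s) * rf (s + d - e)"
      unfolding rb_def by (simp add: algebra_simps)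
    ultimately show ?thesis unfolding h1 h2 by simp
  qed
  finally show ?thesis .
qed

lemma fb_base2:
  fixes a0 b0 d e :: real and K :: nat
  assumes A: "a0 + b0 = e - d" and m: "2*(e - d) = real m" and bd: "2*b0 + 2*d \<in> \<nat>" and K: "m \<le> K"
  shows "(\<Sum>k\<in>{0..K}. fb a0 b0 d e (real k/2)) = rb a0 b0 d e"
proof -
  have "(\<Sum>k\<in>{0..K}. fb a0 b0 d e (real k/2)) = fb a0 b0 d e (real m / 2)"
  proof (rule sum_single_half[OF K])
    fix k assume k: "k \<noteq> m"
    show "fb a0 b0 d e (real k / 2) = 0"
    proof (rule ccontr)
      assume "fb a0 b0 d e (real k / 2) \<noteq> 0"
      from fb_nz[OF this] A have "real k / 2 = e - d" by simp
      then show False using k m by simp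
    qed
  qed
  also have "real m / 2 = e - d" using m by simp
  also have "fb a0 b0 d e (e - d) = rb a0 b0 d e"
  proof -
    have tN: "2*(e-d) \<in> \<nat>" using m by simp
    have h1: "(2*(e-d)+1) * fr (2*(e-d)) * rf (2*(e-d)+1) = 1" by (rule fr_rf_succ[OF tN])
    have h2: "fr (2*b0 + 2*d) * rf (2*b0 + 2*d) = 1" using fr_rf[OF bd] .
    have a0e: "a0 = e - d - b0" using A by simp
    have "fb a0 b0 d e (e - d) = ((2*(e-d)+1) * fr (2*(e-d)) * rf (2*(e-d)+1)) * fr (2*e - 2*d - 2*b0) * rf (2*e+1) * rf (2*d) * rf (2*b0)"
      unfolding fb_def a0e by (simp add: algebra_simps)
    also have "rb a0 b0 d e = (fr (2*b0 + 2*d) * rf (2*b0 + 2*d)) * fr (2*e - 2*d - 2*b0) * rf (2*e+1) * rf (2*d) * rf (2*b0)"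
      unfolding rb_def a0e by (simp add: algebra_simps)
    ultimately show ?thesis unfolding h1 h2 by simp
  qed
  finally show ?thesis .
qed


lemma Nats_diff_real: assumes "x \<in> \<nat>" "y \<in> \<nat>" "(x::real) \<ge> y" shows "x - y \<in> \<nat>"
proof -
  obtain i j where "x = real i" "y = real j" using assms(1,2) by (auto simp: Nats_real_iff)
  then have "x - y = real (i - j)" using assms(3) by simp
  then show ?thesis by simp
qed

lemma fb_sum:
  fixes a b d e :: real and K :: nat
  assumes nn: "a \<ge> 0" "b \<ge> 0" "d \<ge> 0" "e \<ge> 0"
    and half: "2*a \<in> \<nat>" "2*b \<in> \<nat>" "2*d \<in> \<nat>" "2*e \<in> \<nat>"
    and st: "a - b + e - d \<ge> 0" and c1: "a + b + d - e \<in> \<nat>" and c2: "b + d + e - a \<in> \<nat>"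
    and K: "2*(a+b) + 3 \<le> real K"
  shows "(\<Sum>k\<in>{0..K}. fb a b d e (real k/2)) = rb a b d e"
proof (cases "a - b \<ge> e - d")
  case True
  define s where "s = a - b"
  have s0: "s \<ge> 0" using True st by (simp add: s_def)
  have "2*a - 2*b \<in> \<nat>" using Nats_diff_real[OF half(1) half(2)] s0 by (simp add: s_def)
  then obtain m where m: "2*s = real m" by (auto simp: s_def Nats_real_iff algebra_simps)
  obtain j where j: "2*b = real j" using half(2) by (auto simp: Nats_real_iff)
  have mK: "m \<le> K" using m K nn by (simp add: s_def)
  have base: "(\<Sum>k\<in>{0..K}. fb s 0 d e (real k/2)) = rb s 0 d e"
    by (rule fb_base1[OF m half(3) _ mK]) (use True in \<open>simp add: s_def\<close>)
  have "(\<Sum>k\<in>{0..K}. fb (s + real j/2) (0 + real j/2) d e (real k/2)) = rb (s + real j/2) (0 + real j/2) d e"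
    by (rule fb_sum_ind[OF s0 _ nn(3,4) _ _ base]) (use st True K j in \<open>simp_all add: s_def\<close>)
  moreover have "s + real j / 2 = a" "0 + real j / 2 = b" using j by (simp_all add: s_def)
  ultimately show ?thesis by simp
next
  case False
  define a0 where "a0 = (e - d + a - b)/2"
  define b0 where "b0 = (e - d - a + b)/2"
  obtain j where j: "a + b + d - e = real j" using c1 by (auto simp: Nats_real_iff)
  have "2*e - 2*d \<in> \<nat>" using Nats_diff_real[OF half(4) half(3)] False st by simp
  then obtain m where m: "2*(e - d) = real m" by (auto simp: Nats_real_iff algebra_simps)
  have h1: "real m = 2*e - 2*d" using m by simp
  have h2: "2*e - 2*d \<le> 2*a + 2*b" using j of_nat_0_le_iff[of j] by linarith
  have h3: "2*a + 2*b + 3 \<le> real K" using K by simp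
  have "real m \<le> real K" using h1 h2 h3 by linarith
  then have mK: "m \<le> K" by simp
  have A: "a0 + b0 = e - d" by (simp add: a0_def b0_def field_simps)
  have eqb: "2*b0 + 2*d = b + d + e - a" by (simp add: b0_def field_simps)
  have bd: "2*b0 + 2*d \<in> \<nat>" unfolding eqb by (rule c2)
  have base: "(\<Sum>k\<in>{0..K}. fb a0 b0 d e (real k/2)) = rb a0 b0 d e"
    by (rule fb_base2[OF A m bd mK])
  have a00: "a0 \<ge> 0" using st by (simp add: a0_def)
  have b00: "b0 \<ge> 0" using False by (simp add: b0_def)
  have "(\<Sum>k\<in>{0..K}. fb (a0 + real j/2) (b0 + real j/2) d e (real k/2)) = rb (a0 + real j/2) (b0 + real j/2) d e"
    by (rule fb_sum_ind[OF a00 b00 nn(3,4) _ _ base]) (use st K j in \<open>simp_all add: a0_def b0_def field_simps\<close>)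
  moreover have "a0 + real j / 2 = a" "b0 + real j / 2 = b" using j by (simp_all add: a0_def b0_def field_simps)
  ultimately show ?thesis by simp
qed

lemma sg_sq: "sg n * sg n = 1"
  by (simp add: sg_def power_mult_distrib[symmetric])

lemma racah_pmax:
  fixes a b d e x :: real and N :: int
  assumes N: "real_of_int N = a + b + d + e" "N \<ge> -1"
  shows "racah a b x d e (b+d) = rt a b x d e (b+d) N"
proof -
  have c: "\<lceil>a+b+d+e\<rceil> = N" using N(1) by (metis ceiling_of_int)
  have "racah a b x d e (b+d) = (\<Sum>n\<in>{-1..N}. rt a b x d e (b+d) n)" unfolding racah_def c ..
  also have "\<dots> = (\<Sum>n\<in>{N}. rt a b x d e (b+d) n)"
  proof (rule sum.mono_neutral_right)
    show "finite {-1..N}" by simp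
    show "{N} \<subseteq> {-1..N}" using N(2) by simp
    show "\<forall>i\<in>{-1..N} - {N}. rt a b x d e (b+d) i = 0"
    proof
      fix i assume "i \<in> {-1..N} - {N}"
      then have "i < N" by auto
      then have "real_of_int i < real_of_int N" by simp
      then have "real_of_int i - a - e - (b+d) < 0" using N(1) by simp
      then show "rt a b x d e (b+d) i = 0" unfolding rt_def by (simp add: rf_neg)
    qed
  qed
  finally show ?thesis by simp
qed

lemma W_pmax:
  fixes a b d e x :: real and N :: int
  assumes N: "real_of_int N = a + b + d + e"
  shows "(2*x+1) * DD a b d e x * (rt a b x d e (b+d) N * rt a b x d e (b+d) N)
     = fr (a+b+d+e+1) * fr (a+b+d+e+1) * rf (a+e-b-d) * rf (a+e-b-d) * fb a b d e x"
proof -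
  define u1 where "u1 = a + b - x"
  define u2 where "u2 = x + b - a"
  define u3 where "u3 = x + d - e"
  define u4 where "u4 = d + e - x"
  have rt: "rt a b x d e (b+d) N = sg N * fr (a+b+d+e+1) * rf u4 * rf u1 * rf (a+e-b-d) * rf u3 * rf u2"
  proof -
    have "rt a b x d e (b+d) N = sg N * fr (a+b+d+e+1) * rf (d + e - x) * rf (a + b - x) * rf (a+e-b-d) * rf 0 * rf 0
       * rf (x + d - e) * rf (x + b - a)"
      unfolding rt_def N by (simp add: algebra_simps)
    then show ?thesis unfolding u1_def u2_def u3_def u4_def by simp
  qed
  have DD: "DD a b d e x = (fr u1 * fr (a - b + x) * fr u2 * rf (a + b + x + 1)) * (fr u3 * fr (x - d + e) * fr u4 * rf (x + d + e + 1))"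
    unfolding DD_def Dsq_def u1_def u2_def u3_def u4_def by (simp add: algebra_simps)
  have fbx: "fb a b d e x = (2*x+1) * fr (a - b + x) * fr (x - d + e) * rf (a + b + x + 1) * rf (x + d + e + 1) *
     rf u4 * rf u1 * rf u3 * rf u2"
    unfolding fb_def u1_def u2_def u3_def u4_def ..
  have "(2*x+1) * DD a b d e x * (rt a b x d e (b+d) N * rt a b x d e (b+d) N)
     = (sg N * sg N) * (fr u1 * rf u1 * rf u1) * (fr u2 * rf u2 * rf u2) * (fr u3 * rf u3 * rf u3) * (fr u4 * rf u4 * rf u4)
       * (fr (a+b+d+e+1) * fr (a+b+d+e+1) * rf (a+e-b-d) * rf (a+e-b-d))
       * ((2*x+1) * fr (a - b + x) * fr (x - d + e) * rf (a + b + x + 1) * rf (x + d + e + 1))"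
    unfolding rt DD by (simp only: mult_ac)
  also have "\<dots> = fr (a+b+d+e+1) * fr (a+b+d+e+1) * rf (a+e-b-d) * rf (a+e-b-d) * fb a b d e x"
    unfolding sg_sq fr_rf_rf fbx by (simp only: mult_ac mult_1_left)
  finally show ?thesis .
qed


lemma closed_pmax:
  fixes a b d e :: real
  assumes half: "2*b \<in> \<nat>" "2*d \<in> \<nat>" and t: "tri a e (b+d)"
  shows "(2*(b+d)+1) * (Dsq b d (b+d) * Dsq a e (b+d)) *
      (fr (a+b+d+e+1) * fr (a+b+d+e+1) * rf (a+e-b-d) * rf (a+e-b-d) * rb a b d e) = 1"
proof -
  have e4: "a + e - b - d = a + e - (b+d)" by simp
  have e5: "a + b + d - e = a - e + (b+d)" by simp
  have e6: "b + d + e - a = - a + e + (b+d)" by simp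
  have y4: "a + e - b - d \<in> \<nat>" unfolding e4 using t unfolding tri_def by blast
  have y5: "a + b + d - e \<in> \<nat>" unfolding e5 using t unfolding tri_def by blast
  have y6: "b + d + e - a \<in> \<nat>" unfolding e6 using t unfolding tri_def by blast
  have y3: "2*b + 2*d \<in> \<nat>" by (intro Nats_add half)
  have y7: "a + b + d + e + 1 \<in> \<nat>"
  proof -
    have h: "(a + e - b - d) + 2*b + 2*d + 1 \<in> \<nat>" by (intro Nats_add y4 half Nats_1)
    have eq: "a + b + d + e + 1 = (a + e - b - d) + 2*b + 2*d + 1" by simp
    show ?thesis unfolding eq by (rule h)
  qed
  have D1: "Dsq b d (b+d) = fr (2*b) * fr (2*d) * rf (2*b + 2*d + 1)"
    unfolding Dsq_def by (simp add: algebra_simps)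
  have D2: "Dsq a e (b+d) = fr (a + e - b - d) * fr (a + b + d - e) * fr (b + d + e - a) * rf (a + b + d + e + 1)"
    unfolding Dsq_def by (simp add: algebra_simps)
  have "(2*(b+d)+1) * (Dsq b d (b+d) * Dsq a e (b+d)) *
      (fr (a+b+d+e+1) * fr (a+b+d+e+1) * rf (a+e-b-d) * rf (a+e-b-d) * rb a b d e)
    = ((2*b+2*d+1) * fr (2*b+2*d) * rf (2*b+2*d+1)) * (fr (2*b) * rf (2*b)) * (fr (2*d) * rf (2*d))
      * (fr (a + e - b - d) * rf (a + e - b - d)) * (fr (a + e - b - d) * rf (a + e - b - d))
      * (fr (a + b + d - e) * rf (a + b + d - e)) * (fr (b + d + e - a) * rf (b + d + e - a))
      * (fr (a + b + d + e + 1) * rf (a + b + d + e + 1)) * (fr (a + b + d + e + 1) * rf (a + b + d + e + 1))"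
    unfolding D1 D2 rb_def by (simp only: mult_ac distrib_left distrib_right mult_2 add_ac)
  also have "\<dots> = 1"
    using fr_rf_succ[OF y3] fr_rf[OF half(1)] fr_rf[OF half(2)] fr_rf[OF y4] fr_rf[OF y5] fr_rf[OF y6] fr_rf[OF y7]
    by simp
  finally show ?thesis .
qed

lemma N_pmax:
  fixes a b d e :: real and K :: nat
  assumes nn: "a \<ge> 0" "b \<ge> 0" "d \<ge> 0" "e \<ge> 0"
    and half: "2*a \<in> \<nat>" "2*b \<in> \<nat>" "2*d \<in> \<nat>" "2*e \<in> \<nat>"
    and pm: "b + d \<le> a + e" and t: "tri a e (b+d)" and K: "2*(a+b) + 3 \<le> real K"
  shows "(2*(b+d)+1) * (Dsq b d (b+d) * Dsq a e (b+d)) *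
     ipf K a b d e (\<lambda>x. racah a b x d e (b+d)) (\<lambda>x. racah a b x d e (b+d)) = 1"
proof -
  have y4: "a + e - (b+d) \<in> \<nat>" and y5: "a - e + (b+d) \<in> \<nat>" and y6: "- a + e + (b+d) \<in> \<nat>"
    using t unfolding tri_def by blast+
  obtain i where i: "a + e - (b+d) = real i" using y4 by (auto simp: Nats_real_iff)
  obtain j1 where j1: "2*b = real j1" using half(2) by (auto simp: Nats_real_iff)
  obtain j2 where j2: "2*d = real j2" using half(3) by (auto simp: Nats_real_iff)
  define N where "N = int (i + j1 + j2)"
  have N: "real_of_int N = a + b + d + e" using i j1 j2 by (simp add: N_def)
  have N1: "N \<ge> -1" by (simp add: N_def)
  have e5: "a + b + d - e = a - e + (b+d)" by simp
  have e6: "b + d + e - a = - a + e + (b+d)" by simp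
  have c1: "a + b + d - e \<in> \<nat>" unfolding e5 by (rule y5)
  have c2: "b + d + e - a \<in> \<nat>" unfolding e6 by (rule y6)
  have st: "a - b + e - d \<ge> 0" using pm by simp
  have "ipf K a b d e (\<lambda>x. racah a b x d e (b+d)) (\<lambda>x. racah a b x d e (b+d))
      = (\<Sum>k\<in>{0..K}. fr (a+b+d+e+1) * fr (a+b+d+e+1) * rf (a+e-b-d) * rf (a+e-b-d) * fb a b d e (real k/2))"
    unfolding ipf_def
  proof (rule sum.cong[OF refl])
    fix k :: nat
    show "(2*(real k/2)+1) * DD a b d e (real k/2) * racah a b (real k/2) d e (b+d) * racah a b (real k/2) d e (b+d)
        = fr (a+b+d+e+1) * fr (a+b+d+e+1) * rf (a+e-b-d) * rf (a+e-b-d) * fb a b d e (real k/2)"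
      unfolding racah_pmax[OF N N1] using W_pmax[OF N, of "real k/2"] by (simp only: mult.assoc)
  qed
  also have "\<dots> = fr (a+b+d+e+1) * fr (a+b+d+e+1) * rf (a+e-b-d) * rf (a+e-b-d) * (\<Sum>k\<in>{0..K}. fb a b d e (real k/2))"
    by (simp add: sum_distrib_left)
  also have "\<dots> = fr (a+b+d+e+1) * fr (a+b+d+e+1) * rf (a+e-b-d) * rf (a+e-b-d) * rb a b d e"
    using fb_sum[OF nn half st c1 c2 K] by simp
  finally show ?thesis using closed_pmax[OF half(2,3) t] by simp
qed


lemma Dsq_perm3: "Dsq x y z = Dsq x z y"
proof -
  have "fr (x + y - z) = fr (x - z + y)" "fr (x - y + z) = fr (x + z - y)" "fr (- x + y + z) = fr (- x + z + y)"
    "rf (x + y + z + 1) = rf (x + z + y + 1)" by (simp_all add: algebra_simps)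
  then show ?thesis unfolding Dsq_def by (simp only: mult_ac)
qed

lemma DD_sym: "DD b a e d x = DD a b d e x"
proof -
  have "Dsq b a x = Dsq a b x" by (rule Dsq_perm2)
  moreover have "Dsq x e d = Dsq x d e" by (rule Dsq_perm3)
  ultimately show ?thesis unfolding DD_def by simp
qed

lemma ipf_sym: "ipf K b a e d f g = ipf K a b d e f g"
  unfolding ipf_def DD_sym[of b a e d] ..

lemma tri_shift:
  assumes t: "tri x y p" and le: "p + real m \<le> x + y"
  shows "tri x y (p + real m)"
proof -
  have h: "x + y - p \<in> \<nat>" "x - y + p \<in> \<nat>" "- x + y + p \<in> \<nat>" using t unfolding tri_def by blast+
  have "x + y - p - real m \<in> \<nat>" by (rule Nats_diff_real[OF h(1)]) (use le in simp_all)
  moreover have "x - y + p + real m \<in> \<nat>" by (intro Nats_add h(2)) simp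
  moreover have "- x + y + p + real m \<in> \<nat>" by (intro Nats_add h(3)) simp
  ultimately show ?thesis unfolding tri_def by (simp add: algebra_simps)
qed

lemma tri_half: assumes "tri x y z" shows "2*x \<in> \<nat>" "2*y \<in> \<nat>" "2*z \<in> \<nat>"
proof -
  have h: "x + y - z \<in> \<nat>" "x - y + z \<in> \<nat>" "- x + y + z \<in> \<nat>" using assms unfolding tri_def by blast+
  have e1: "2*x = (x + y - z) + (x - y + z)" by simp
  have e2: "2*y = (x + y - z) + (- x + y + z)" by simp
  have e3: "2*z = (x - y + z) + (- x + y + z)" by simp
  show "2*x \<in> \<nat>" unfolding e1 by (intro Nats_add h)
  show "2*y \<in> \<nat>" unfolding e2 by (intro Nats_add h)
  show "2*z \<in> \<nat>" unfolding e3 by (intro Nats_add h)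
qed

lemma tri_pm:
  assumes t1: "tri b d p" and t2: "tri a e p" and le: "b + d \<le> a + e"
  shows "tri a e (b+d)"
proof -
  have h1: "b + d - p \<in> \<nat>" "b - d + p \<in> \<nat>" "- b + d + p \<in> \<nat>" using t1 unfolding tri_def by blast+
  have h2: "a + e - p \<in> \<nat>" "a - e + p \<in> \<nat>" "- a + e + p \<in> \<nat>" using t2 unfolding tri_def by blast+
  have e1: "a + e - (b+d) = (a + e - p) - (b + d - p)" by simp
  have e2: "a - e + (b+d) = (a - e + p) + (b + d - p)" by simp
  have e3: "- a + e + (b+d) = (- a + e + p) + (b + d - p)" by simp
  have "a + e - (b+d) \<in> \<nat>" unfolding e1 by (rule Nats_diff_real[OF h2(1) h1(1)]) (use le in simp)
  moreover have "a - e + (b+d) \<in> \<nat>" unfolding e2 by (intro Nats_add h1 h2)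
  moreover have "- a + e + (b+d) \<in> \<nat>" unfolding e3 by (intro Nats_add h1 h2)
  ultimately show ?thesis unfolding tri_def by blast
qed

lemma norm_all:
  fixes a b d e p :: real and K :: nat
  assumes tbd: "tri b d p" and tae: "tri a e p" and K: "2*(a+b) + 3 \<le> real K"
  shows "(2*p+1) * (Dsq b d p * Dsq a e p) * ipf K a b d e (\<lambda>x. racah a b x d e p) (\<lambda>x. racah a b x d e p) = 1"
proof -
  have nn: "a \<ge> 0" "b \<ge> 0" "d \<ge> 0" "e \<ge> 0" "p \<ge> 0"
    using tri_nonneg[OF tbd] tri_nonneg[OF tae] by auto
  have half: "2*a \<in> \<nat>" "2*b \<in> \<nat>" "2*d \<in> \<nat>" "2*e \<in> \<nat>"
    using tri_half[OF tbd] tri_half[OF tae] by auto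
  define Nf where "Nf = (\<lambda>q. (2*q+1) * (Dsq b d q * Dsq a e q) * ipf K a b d e (\<lambda>x. racah a b x d e q) (\<lambda>x. racah a b x d e q))"
  define pm where "pm = min (b+d) (a+e)"
  have Npm: "Nf pm = 1"
  proof (cases "b + d \<le> a + e")
    case True
    then have "pm = b + d" by (simp add: pm_def)
    then show ?thesis unfolding Nf_def using N_pmax[OF nn(1-4) half True tri_pm[OF tbd tae True] K] by simp
  next
    case False
    then have le: "a + e \<le> b + d" by simp
    then have pmv: "pm = a + e" by (simp add: pm_def)
    have t': "tri b d (a+e)" using tri_pm[OF tae tbd le] .
    have "(2*(a+e)+1) * (Dsq a e (a+e) * Dsq b d (a+e)) *
       ipf K b a e d (\<lambda>x. racah b a x e d (a+e)) (\<lambda>x. racah b a x e d (a+e)) = 1"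
      by (rule N_pmax[OF nn(2,1,4,3) half(2,1,4,3) _ t']) (use le K in \<open>simp_all add: algebra_simps\<close>)
    moreover have "\<And>x. racah b a x e d (a+e) = racah a b x d e (a+e)" by (rule racah_sym2[symmetric])
    ultimately show ?thesis unfolding Nf_def pmv ipf_sym[of K b a e d] by (simp add: ac_simps)
  qed
  have pp: "p \<le> pm" using tri_le[OF tbd] tri_le[OF tae] by (simp add: pm_def)
  have "pm - p \<in> \<nat>"
  proof (cases "b + d \<le> a + e")
    case True then have "pm - p = b + d - p" by (simp add: pm_def)
    then show ?thesis using tbd unfolding tri_def by simp
  next
    case False then have "pm - p = a + e - p" by (simp add: pm_def)
    then show ?thesis using tae unfolding tri_def by simp
  qed
  then obtain j0 where j0: "pm = p + real j0" by (auto simp: Nats_real_iff algebra_simps)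
  have step: "\<And>m. m \<le> j0 \<Longrightarrow> Nf (p + real m) = Nf p"
  proof -
    fix m show "m \<le> j0 \<Longrightarrow> Nf (p + real m) = Nf p"
    proof (induction m)
      case 0 then show ?case by simp
    next
      case (Suc m)
      have le1: "p + real m + 1 \<le> pm" using Suc.prems j0 by simp
      have pmb: "pm \<le> b + d" "pm \<le> a + e" by (simp_all add: pm_def)
      have t1: "tri b d (p + real m)" by (rule tri_shift[OF tbd]) (use le1 pmb in simp)
      have t2: "tri a e (p + real m)" by (rule tri_shift[OF tae]) (use le1 pmb in simp)
      have t3: "tri b d (p + real m + 1)" using tri_shift[OF tbd, of "Suc m"] le1 pmb by (simp add: algebra_simps)
      have t4: "tri a e (p + real m + 1)" using tri_shift[OF tae, of "Suc m"] le1 pmb by (simp add: algebra_simps)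
      have q0: "p + real m \<ge> 0" using nn by simp
      have "Nf (p + real m + 1) = Nf (p + real m)"
        unfolding Nf_def using norm_step[OF nn(1-4) q0 t1 t2 t3 t4] K by simp
      then show ?case using Suc by (simp add: algebra_simps)
    qed
  qed
  have "Nf p = 1" using step[of j0] j0 Npm by simp
  then show ?thesis unfolding Nf_def .
qed


lemma delta_ok_tri: "delta_ok x y z \<longleftrightarrow> tri x y z"
  unfolding delta_ok_def tri_def using tri_sum[of x y z] unfolding tri_def by blast

lemma rfact_fr: "x \<in> \<nat> \<Longrightarrow> rfact x = fr x"
  by (simp add: rfact_def fr_def)

lemma inv_rfact_rf: "x \<in> \<nat> \<Longrightarrow> 1 / rfact x = rf x"
  by (simp add: rfact_def rf_def)

lemma Delta_sq:
  assumes t: "tri x y z"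
  shows "Delta x y z * Delta x y z = Dsq x y z"
proof -
  have h: "x + y - z \<in> \<nat>" "x - y + z \<in> \<nat>" "- x + y + z \<in> \<nat>" using t unfolding tri_def by blast+
  have s: "x + y + z + 1 \<in> \<nat>" by (rule tri_sum[OF t])
  have arg: "rfact (x + y - z) * rfact (x - y + z) * rfact (- x + y + z) / rfact (x + y + z + 1) = Dsq x y z"
    unfolding Dsq_def rfact_fr[OF h(1)] rfact_fr[OF h(2)] rfact_fr[OF h(3)] inv_rfact_rf[OF s, symmetric]
    by simp
  have "Dsq x y z \<ge> 0" unfolding Dsq_def by (simp add: fr_nonneg rf_nonneg)
  then show ?thesis unfolding Delta_def arg by simp
qed

lemma sixj_eq:
  "sixj_SU2 a b c d e f = (if tri a b c \<and> tri c d e \<and> tri b d f \<and> tri a e f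
     then Delta a b c * Delta c d e * Delta b d f * Delta a e f * racah a b c d e f else 0)"
proof (cases "tri a b c \<and> tri c d e \<and> tri b d f \<and> tri a e f")
  case False
  then have nd: "\<not> (delta_ok a b c \<and> delta_ok c d e \<and> delta_ok b d f \<and> delta_ok a e f)"
    unfolding delta_ok_tri .
  show ?thesis unfolding sixj_SU2_def if_not_P[OF nd] if_not_P[OF False] ..
next
  case True
  define S where "S = {n. racah_ok a b c d e f n}"
  define T where "T = {-1..\<lceil>a+b+d+e\<rceil>}"
  have ST: "S \<subseteq> T"
  proof
    fix n assume "n \<in> S"
    then have h: "real_of_int n + 1 \<in> \<nat>" "a + b + d + e - real_of_int n \<in> \<nat>"
      unfolding S_def racah_ok_def by auto
    have "real_of_int n + 1 \<ge> 0" using Nats_ge0[OF h(1)] .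
    then have "n \<ge> -1" by simp
    moreover have "a + b + d + e - real_of_int n \<ge> 0" using Nats_ge0[OF h(2)] .
    then have "real_of_int n \<le> a + b + d + e" by simp
    then have "n \<le> \<lceil>a+b+d+e\<rceil>" unfolding le_ceiling_iff by linarith
    ultimately show "n \<in> T" unfolding T_def by simp
  qed
  have term_eq: "\<And>n. n \<in> S \<Longrightarrow> (-1) ^ nat \<bar>n\<bar> * rfact (real_of_int n + 1) /
          (rfact (real_of_int n - a - b - c) * rfact (real_of_int n - c - d - e) *
           rfact (real_of_int n - b - d - f) * rfact (real_of_int n - a - e - f) *
           rfact (a + b + d + e - real_of_int n) * rfact (a + c + d + f - real_of_int n) *
           rfact (b + c + e + f - real_of_int n)) = rt a b c d e f n"
  proof -
    fix n assume "n \<in> S"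
    then have h: "real_of_int n + 1 \<in> \<nat>" "real_of_int n - a - b - c \<in> \<nat>" "real_of_int n - c - d - e \<in> \<nat>"
      "real_of_int n - b - d - f \<in> \<nat>" "real_of_int n - a - e - f \<in> \<nat>" "a + b + d + e - real_of_int n \<in> \<nat>"
      "a + c + d + f - real_of_int n \<in> \<nat>" "b + c + e + f - real_of_int n \<in> \<nat>"
      unfolding S_def racah_ok_def by auto
    show "?thesis n"
      unfolding rt_def sg_def rfact_fr[OF h(1)] inv_rfact_rf[OF h(2), symmetric] inv_rfact_rf[OF h(3), symmetric]
        inv_rfact_rf[OF h(4), symmetric] inv_rfact_rf[OF h(5), symmetric] inv_rfact_rf[OF h(6), symmetric]
        inv_rfact_rf[OF h(7), symmetric] inv_rfact_rf[OF h(8), symmetric]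
      by (simp add: divide_inverse)
  qed
  have "(\<Sum>n\<in>S. (-1) ^ nat \<bar>n\<bar> * rfact (real_of_int n + 1) /
          (rfact (real_of_int n - a - b - c) * rfact (real_of_int n - c - d - e) *
           rfact (real_of_int n - b - d - f) * rfact (real_of_int n - a - e - f) *
           rfact (a + b + d + e - real_of_int n) * rfact (a + c + d + f - real_of_int n) *
           rfact (b + c + e + f - real_of_int n))) = (\<Sum>n\<in>S. rt a b c d e f n)"
    by (rule sum.cong[OF refl]) (rule term_eq)
  also have "\<dots> = (\<Sum>n\<in>T. rt a b c d e f n)"
  proof (rule sum.mono_neutral_left)
    show "finite T" unfolding T_def by simp
    show "S \<subseteq> T" by (rule ST)
    show "\<forall>i\<in>T - S. rt a b c d e f i = 0"
    proof
      fix i assume i: "i \<in> T - S"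
      then have "i \<ge> -1" unfolding T_def by simp
      then have "real_of_int i + 1 = real (nat (i + 1))" by simp
      then have n1: "real_of_int i + 1 \<in> \<nat>" by (simp only: of_nat_in_Nats)
      have "\<not> racah_ok a b c d e f i" using i unfolding S_def by simp
      then have "\<not> (real_of_int i - a - b - c \<in> \<nat> \<and> real_of_int i - c - d - e \<in> \<nat> \<and>
        real_of_int i - b - d - f \<in> \<nat> \<and> real_of_int i - a - e - f \<in> \<nat> \<and>
        a + b + d + e - real_of_int i \<in> \<nat> \<and> a + c + d + f - real_of_int i \<in> \<nat> \<and>
        b + c + e + f - real_of_int i \<in> \<nat>)" using n1 unfolding racah_ok_def by blast
      then show "rt a b c d e f i = 0" unfolding rt_def by (auto simp: rf_nz_iff[symmetric])
    qed
  qed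
  finally have "(\<Sum>n\<in>S. (-1) ^ nat \<bar>n\<bar> * rfact (real_of_int n + 1) /
          (rfact (real_of_int n - a - b - c) * rfact (real_of_int n - c - d - e) *
           rfact (real_of_int n - b - d - f) * rfact (real_of_int n - a - e - f) *
           rfact (a + b + d + e - real_of_int n) * rfact (a + c + d + f - real_of_int n) *
           rfact (b + c + e + f - real_of_int n))) = racah a b c d e f" unfolding racah_def T_def .
  then show ?thesis using True unfolding sixj_SU2_def delta_ok_tri S_def by simp
qed


lemma sixj_prod:
  fixes a b d e p q X :: real
  assumes tp: "tri b d p" "tri a e p" and tq: "tri b d q" "tri a e q"
  shows "(2*X+1) * sixj_SU2 a b X d e p * sixj_SU2 a b X d e q
     = (Delta b d p * Delta a e p * Delta b d q * Delta a e q) *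
       ((2*X+1) * DD a b d e X * racah a b X d e p * racah a b X d e q)"
proof (cases "tri a b X \<and> tri X d e")
  case True
  have "Delta a b X * Delta a b X = Dsq a b X" by (rule Delta_sq) (use True in simp)
  moreover have "Delta X d e * Delta X d e = Dsq X d e" by (rule Delta_sq) (use True in simp)
  ultimately show ?thesis unfolding sixj_eq DD_def using True tp tq
    by (simp add: ac_simps)
next
  case False
  then have "racah a b X d e p = 0" using racah_nz by blast
  then show ?thesis unfolding sixj_eq using False by simp
qed

lemma su2_orth:
  fixes a b d e p q :: real and K :: nat
  assumes K: "2*(a+b)+3 \<le> real K"
  shows "(\<Sum>k\<in>{0..K}. (2*(real k/2)+1) * sixj_SU2 a b (real k/2) d e p * sixj_SU2 a b (real k/2) d e q)
    = (if p = q \<and> tri b d p \<and> tri a e p then 1/(2*p+1) else 0)"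
proof (cases "tri b d p \<and> tri a e p \<and> tri b d q \<and> tri a e q")
  case False
  have z: "\<And>X. sixj_SU2 a b X d e p * sixj_SU2 a b X d e q = 0"
    using False unfolding sixj_eq by auto
  have s0: "(\<Sum>k\<in>{0..K}. (2*(real k/2)+1) * sixj_SU2 a b (real k/2) d e p * sixj_SU2 a b (real k/2) d e q) = 0"
    by (rule sum.neutral) (use z in \<open>simp add: mult.assoc\<close>)
  have nc: "\<not> (p = q \<and> tri b d p \<and> tri a e p)" using False by auto
  show ?thesis unfolding if_not_P[OF nc] by (rule s0)
next
  case True
  then have tp: "tri b d p" "tri a e p" and tq: "tri b d q" "tri a e q" by auto
  have nn: "a \<ge> 0" "b \<ge> 0" "d \<ge> 0" "e \<ge> 0" "p \<ge> 0"
    using tri_nonneg[OF tp(1)] tri_nonneg[OF tp(2)] by auto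
  define C where "C = Delta b d p * Delta a e p * Delta b d q * Delta a e q"
  have "(\<Sum>k\<in>{0..K}. (2*(real k/2)+1) * sixj_SU2 a b (real k/2) d e p * sixj_SU2 a b (real k/2) d e q)
      = C * ipf K a b d e (\<lambda>x. racah a b x d e p) (\<lambda>x. racah a b x d e q)"
    unfolding ipf_def C_def sixj_prod[OF tp tq] by (simp add: sum_distrib_left)
  also have "\<dots> = (if p = q \<and> tri b d p \<and> tri a e p then 1/(2*p+1) else 0)"
  proof (cases "p = q")
    case True
    have N: "(2*p+1) * (Dsq b d p * Dsq a e p) * ipf K a b d e (\<lambda>x. racah a b x d e p) (\<lambda>x. racah a b x d e p) = 1"
      by (rule norm_all[OF tp K])
    have CC: "C = Dsq b d p * Dsq a e p"
      unfolding C_def True[symmetric] using Delta_sq[OF tp(1)] Delta_sq[OF tp(2)] by (simp add: ac_simps)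
    have pos: "2*p+1 > 0" using nn by simp
    from N have "C * ipf K a b d e (\<lambda>x. racah a b x d e p) (\<lambda>x. racah a b x d e p) = 1/(2*p+1)"
      unfolding CC using pos by (simp add: field_simps)
    then show ?thesis using True tp by simp
  next
    case False
    have K': "2*(a+b)+2 \<le> real K" using K by simp
    have "ipf K a b d e (\<lambda>x. racah a b x d e p) (\<lambda>x. racah a b x d e q) = 0"
      by (rule orth_gen[OF nn False K'])
    then show ?thesis using False by simp
  qed
  finally show ?thesis .
qed


lemma Ints_nonneg_Nats: assumes "(x::real) \<in> \<int>" "x \<ge> 0" shows "x \<in> \<nat>"
proof -
  obtain m where m: "x = real_of_int m" using assms(1) by (auto elim: Ints_cases)
  then have "m \<ge> 0" using assms(2) by simp
  then have "x = real (nat m)" using m by simp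
  then show ?thesis by simp
qed

lemma Nats_Ints: "(x::real) \<in> \<nat> \<Longrightarrow> x \<in> \<int>"
  by (auto simp: Nats_real_iff)

lemma tri_su11:
  fixes a' b' c' d' p' :: real
  assumes h: "2 * a' \<in> \<int>" "2 * b' \<in> \<int>" "2 * c' \<in> \<int>" "2 * d' \<in> \<int>" "2 * p' \<in> \<int>"
  defines "A \<equiv> (a' + b' - c' + d') / 2" and "B \<equiv> (- a' - b' - c' + d') / 2 - 1"
    and "D \<equiv> (- a' + b' + c' + d') / 2" and "E \<equiv> (a' - b' + c' + d') / 2"
  shows "(tri B D p' \<and> tri A E p') \<longleftrightarrow>
    ((su11_adm a' p' d' \<and> a' + p' + d' \<in> \<int>) \<and> (su11_adm b' c' p' \<and> b' + c' + p' \<in> \<int>))"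
proof -
  have e1: "B + D - p' = d' - a' - 1 - p'" unfolding B_def D_def by (simp add: field_simps)
  have e2: "B - D + p' = p' - b' - c' - 1" unfolding B_def D_def by (simp add: field_simps)
  have e3: "- B + D + p' = p' + b' + c' + 1" unfolding B_def D_def by (simp add: field_simps)
  have e4: "A + E - p' = a' + d' - p'" unfolding A_def E_def by (simp add: field_simps)
  have e5: "A - E + p' = b' - c' + p'" unfolding A_def E_def by (simp add: field_simps)
  have e6: "- A + E + p' = c' - b' + p'" unfolding A_def E_def by (simp add: field_simps)
  have L: "(tri B D p' \<and> tri A E p') \<longleftrightarrow>
     (d' - a' - 1 - p' \<in> \<nat> \<and> p' - b' - c' - 1 \<in> \<nat> \<and> p' + b' + c' + 1 \<in> \<nat> \<and>
      a' + d' - p' \<in> \<nat> \<and> b' - c' + p' \<in> \<nat> \<and> c' - b' + p' \<in> \<nat>)"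
    unfolding tri_def e1 e2 e3 e4 e5 e6 by blast
  show ?thesis
  proof
    assume "tri B D p' \<and> tri A E p'"
    then have n: "d' - a' - 1 - p' \<in> \<nat>" "p' - b' - c' - 1 \<in> \<nat>" "p' + b' + c' + 1 \<in> \<nat>"
      "a' + d' - p' \<in> \<nat>" "b' - c' + p' \<in> \<nat>" "c' - b' + p' \<in> \<nat>" using L by blast+
    have g: "d' - a' - 1 - p' \<ge> 0" "p' - b' - c' - 1 \<ge> 0" "p' + b' + c' + 1 \<ge> 0"
      "a' + d' - p' \<ge> 0" "b' - c' + p' \<ge> 0" "c' - b' + p' \<ge> 0" using n Nats_ge0 by blast+
    have z1: "a' + p' + d' \<in> \<int>"
    proof -
      have eq: "a' + p' + d' = (d' - a' - 1 - p') + 1 + 2*a' + 2*p'" by simp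
      show ?thesis unfolding eq by (intro Ints_add Nats_Ints n h Ints_1)
    qed
    have z2: "b' + c' + p' \<in> \<int>"
    proof -
      have eq: "b' + c' + p' = (p' - b' - c' - 1) + 1 + 2*b' + 2*c'" by simp
      show ?thesis unfolding eq by (intro Ints_add Nats_Ints n h Ints_1)
    qed
    show "(su11_adm a' p' d' \<and> a' + p' + d' \<in> \<int>) \<and> (su11_adm b' c' p' \<and> b' + c' + p' \<in> \<int>)"
      unfolding su11_adm_def using g z1 z2 by auto
  next
    assume "(su11_adm a' p' d' \<and> a' + p' + d' \<in> \<int>) \<and> (su11_adm b' c' p' \<and> b' + c' + p' \<in> \<int>)"
    then have s: "d' \<ge> a' + p' + 1" "a' \<le> p' + d'" "p' \<le> a' + d'" "a' + p' + d' \<ge> -1"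
      "p' \<ge> b' + c' + 1" "b' \<le> c' + p'" "c' \<le> b' + p'" "b' + c' + p' \<ge> -1"
      and z: "a' + p' + d' \<in> \<int>" "b' + c' + p' \<in> \<int>" unfolding su11_adm_def by auto
    have i1: "d' - a' - 1 - p' \<in> \<int>"
    proof -
      have eq: "d' - a' - 1 - p' = (a' + p' + d') - 2*a' - 2*p' - 1" by simp
      show ?thesis unfolding eq by (intro Ints_diff z h Ints_1)
    qed
    have i2: "p' - b' - c' - 1 \<in> \<int>"
    proof -
      have eq: "p' - b' - c' - 1 = 2*p' - (b' + c' + p') - 1" by simp
      show ?thesis unfolding eq by (intro Ints_diff z h Ints_1)
    qed
    have i3: "p' + b' + c' + 1 \<in> \<int>"
    proof -
      have eq: "p' + b' + c' + 1 = (b' + c' + p') + 1" by simp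
      show ?thesis unfolding eq by (intro Ints_add z Ints_1)
    qed
    have i4: "a' + d' - p' \<in> \<int>"
    proof -
      have eq: "a' + d' - p' = (a' + p' + d') - 2*p'" by simp
      show ?thesis unfolding eq by (intro Ints_diff z h)
    qed
    have i5: "b' - c' + p' \<in> \<int>"
    proof -
      have eq: "b' - c' + p' = (b' + c' + p') - 2*c'" by simp
      show ?thesis unfolding eq by (intro Ints_diff z h)
    qed
    have i6: "c' - b' + p' \<in> \<int>"
    proof -
      have eq: "c' - b' + p' = (b' + c' + p') - 2*b'" by simp
      show ?thesis unfolding eq by (intro Ints_diff z h)
    qed
    have "d' - a' - 1 - p' \<in> \<nat>" by (rule Ints_nonneg_Nats[OF i1]) (use s in simp)
    moreover have "p' - b' - c' - 1 \<in> \<nat>" by (rule Ints_nonneg_Nats[OF i2]) (use s in simp)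
    moreover have "p' + b' + c' + 1 \<in> \<nat>" by (rule Ints_nonneg_Nats[OF i3]) (use s in simp)
    moreover have "a' + d' - p' \<in> \<nat>" by (rule Ints_nonneg_Nats[OF i4]) (use s in simp)
    moreover have "b' - c' + p' \<in> \<nat>" by (rule Ints_nonneg_Nats[OF i5]) (use s in simp)
    moreover have "c' - b' + p' \<in> \<nat>" by (rule Ints_nonneg_Nats[OF i6]) (use s in simp)
    ultimately show "tri B D p' \<and> tri A E p'" using L by blast
  qed
qed


theorem mainTheorem2:
  fixes a' b' c' d' p' q' :: real
  assumes "2 * a' \<in> \<int>" "2 * b' \<in> \<int>" "2 * c' \<in> \<int>" "2 * d' \<in> \<int>"
    "2 * p' \<in> \<int>" "2 * q' \<in> \<int>"
  defines "T \<equiv> \<lambda>k::int. let X = real_of_int k / 2 in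
             (2 * X + 1) * sixj_ext a' b' X c' d' p' * sixj_ext a' b' X c' d' q'"
  shows "finite {k. T k \<noteq> 0} \<and>
         (\<Sum>k\<in>{k. T k \<noteq> 0}. T k) =
           (if p' = q' then su11_sym a' p' d' * su11_sym b' c' p' / (2 * p' + 1) else 0)"
proof -
  define A where "A = (a' + b' - c' + d') / 2"
  define B where "B = (- a' - b' - c' + d') / 2 - 1"
  define D where "D = (- a' + b' + c' + d') / 2"
  define E where "E = (a' - b' + c' + d') / 2"
  define K where "K = nat \<lceil>2*(A+B)\<rceil> + 3"
  have K: "2*(A+B) + 3 \<le> real K"
  proof -
    have "2*(A+B) \<le> real (nat \<lceil>2*(A+B)\<rceil>)" by linarith
    then show ?thesis unfolding K_def by simp
  qed
  have ext: "\<And>X r. sixj_ext a' b' X c' d' r = sixj_SU2 A B X D E r"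
    unfolding sixj_ext_def A_def B_def D_def E_def ..
  have Tk: "\<And>k. T k = (2*(real_of_int k/2)+1) * sixj_SU2 A B (real_of_int k/2) D E p' * sixj_SU2 A B (real_of_int k/2) D E q'"
    unfolding T_def ext Let_def ..
  have supp: "{k. T k \<noteq> 0} \<subseteq> {0..int K}"
  proof
    fix k assume "k \<in> {k. T k \<noteq> 0}"
    then have "sixj_SU2 A B (real_of_int k/2) D E p' \<noteq> 0" unfolding Tk by auto
    then have t: "tri A B (real_of_int k/2)" unfolding sixj_eq by (auto split: if_splits)
    have "real_of_int k / 2 \<ge> 0" by (rule tri_nonneg(3)[OF t])
    then have k0: "k \<ge> 0" by simp
    have "real_of_int k / 2 \<le> A + B" by (rule tri_le[OF t])
    then have h1: "real_of_int k \<le> 2*A + 2*B" by simp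
    have h2: "2*A + 2*B + 3 \<le> real K" using K by simp
    have "real_of_int k \<le> real K" using h1 h2 by linarith
    then have "k \<le> int K" by linarith
    then show "k \<in> {0..int K}" using k0 by simp
  qed
  have fin: "finite {k. T k \<noteq> 0}" by (rule finite_subset[OF supp]) simp
  have "(\<Sum>k\<in>{k. T k \<noteq> 0}. T k) = (\<Sum>k\<in>{0..int K}. T k)"
    by (rule sum.mono_neutral_left) (use supp in auto)
  also have "\<dots> = (\<Sum>j\<in>{0..K}. T (int j))"
  proof -
    have "{0..int K} = int ` {0..K}" by (simp add: image_int_atLeastAtMost)
    then show ?thesis by (simp add: sum.reindex)
  qed
  also have "\<dots> = (\<Sum>j\<in>{0..K}. (2*(real j/2)+1) * sixj_SU2 A B (real j/2) D E p' * sixj_SU2 A B (real j/2) D E q')"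
    unfolding Tk by simp
  also have "\<dots> = (if p' = q' \<and> tri B D p' \<and> tri A E p' then 1/(2*p'+1) else 0)"
    by (rule su2_orth[OF K])
  also have "\<dots> = (if p' = q' then su11_sym a' p' d' * su11_sym b' c' p' / (2 * p' + 1) else 0)"
  proof -
    have eq: "(tri B D p' \<and> tri A E p') \<longleftrightarrow>
      ((su11_adm a' p' d' \<and> a' + p' + d' \<in> \<int>) \<and> (su11_adm b' c' p' \<and> b' + c' + p' \<in> \<int>))"
      unfolding A_def B_def D_def E_def by (rule tri_su11[OF assms(1-5)])
    show ?thesis unfolding su11_sym_def using eq by auto
  qed
  finally show ?thesis using fin by simp
qed


end
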